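(* Let $\mathbf{A}\in\mathbb{R}^{n\times d}$, $\mathbf{B}\in\mathbb{R}^{n\times s}$, and $\nu>0$. Let $\kappa=1+\|\mathbf{A}\|^2/\nu$ and suppose that $\mathbf{A}\mathbf{A}^\top+\nu\mathbf{I}\approx_4\mathbf{B}\mathbf{B}^\top+\nu\mathbf{I}$. Then, given a $\frac{1}{160\kappa^2}$-solver $f$ for $\mathbf{A}^\top\mathbf{A}+\nu\mathbf{I}$, one can construct an $\epsilon$-solver for $\mathbf{B}^\top\mathbf{B}+\nu\mathbf{I}$ that applies $f$ at most $16\log(8\kappa/\epsilon)$ times and spends an additional $O\big((n+\mathcal{T}_{\mathbf{A}}+\mathcal{T}_{\mathbf{B}})\log(\kappa/\epsilon)\big)$ time.
   Context: For symmetric PSD $\mathbf{X},\mathbf{Y}$, $\mathbf{X}\approx_c\mathbf{Y}$ means $c^{-1}\mathbf{Y}\preceq\mathbf{X}\preceq c\mathbf{Y}$ in the Loewner order. For a symmetric positive definite $\mathbf{N}$, $\hat{\mathbf{x}}$ is an $\epsilon$-solution to $\mathbf{N}\mathbf{x}=\mathbf{b}$ if $\|\hat{\mathbf{x}}-\mathbf{N}^{-1}\mathbf{b}\|_{\mathbf{N}}^2\le\epsilon\|\mathbf{b}\|^2_{\mathbf{N}^{-1}}$ ($\|\mathbf{x}\|_{\mathbf{K}}=\sqrt{\mathbf{x}^\top\mathbf{K}\mathbf{x}}$); an $\epsilon$-solver returns an $\epsilon$-solution for every right-hand side. For a matrix $\mathbf{X}\in\mathbb{R}^{a\times b}$, $\mathcal{T}_{\mathbf{X}}$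 denotes the maximum cost of applying $\mathbf{X}$ or $\mathbf{X}^\top$ to a vector, plus $a+b$. $\|\cdot\|$ is the spectral norm; $\log$ is natural. *)

theory Defs
  imports Complex_Main "Jordan_Normal_Form.Matrix" "Jordan_Normal_Form.Gauss_Jordan_Elimination"
begin

definition qform :: "real mat \<Rightarrow> real vec \<Rightarrow> real" where
  "qform K x = x \<bullet> (K *\<^sub>v x)"

definition vnorm :: "real vec \<Rightarrow> real" where
  "vnorm v = sqrt (v \<bullet> v)"

definition spec_norm :: "real mat \<Rightarrow> real" where
  "spec_norm M = Sup ({0} \<union> {vnorm (M *\<^sub>v v) | v. dim_vec v = dim_col M \<and> vnorm v = 1})"

definition loewner_le :: "real mat \<Rightarrow> real mat \<Rightarrow> bool" where
  "loewner_le X Y \<longleftrightarrow> dim_row X = dim_col X \<and> dim_row Y = dim_row X \<and> dim_col Y = dim_col X \<and>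
     (\<forall>x. dim_vec x = dim_row X \<longrightarrow> qform X x \<le> qform Y x)"

definition spectral_approx :: "real \<Rightarrow> real mat \<Rightarrow> real mat \<Rightarrow> bool" where
  "spectral_approx c X Y \<longleftrightarrow> loewner_le ((1 / c) \<cdot>\<^sub>m Y) X \<and> loewner_le X (c \<cdot>\<^sub>m Y)"

definition mat_inv :: "real mat \<Rightarrow> real mat" where
  "mat_inv N = the (mat_inverse N)"

definition eps_solution :: "real mat \<Rightarrow> real \<Rightarrow> real vec \<Rightarrow> real vec \<Rightarrow> bool" where
  "eps_solution N eps b xh \<longleftrightarrow> dim_vec xh = dim_vec b \<and>
     qform N (xh - mat_inv N *\<^sub>v b) \<le> eps * qform (mat_inv N) b"

definition eps_solver :: "real mat \<Rightarrow> real \<Rightarrow> (real vec \<Rightarrow> real vec) \<Rightarrow> bool" where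
  "eps_solver N eps g \<longleftrightarrow> (\<forall>b. dim_vec b = dim_row N \<longrightarrow> eps_solution N eps b (g b))"

text \<open>Straight-line programs over a growing list of vector registers; register 0 holds the
  input b, each instruction appends one new register, and the output is the last register.\<close>
datatype instr = LinComb real nat real nat | MulA nat | MulAt nat | MulB nat | MulBt nat | CallF nat

definition get_reg :: "real vec list \<Rightarrow> nat \<Rightarrow> real vec" where
  "get_reg r i = (if i < length r then r ! i else 0\<^sub>v 0)"

definition mat_app :: "real mat \<Rightarrow> real vec \<Rightarrow> real vec" where
  "mat_app M u = (if dim_vec u = dim_col M then M *\<^sub>v u else 0\<^sub>v (dim_row M))"

fun step :: "real mat \<Rightarrow> real mat \<Rightarrow> (real vec \<Rightarrow> real vec) \<Rightarrow> real vec list \<Rightarrow> instr \<Rightarrow> real vec" where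
  "step A B f r (LinComb a i c j) =
     (let u = get_reg r i; w = get_reg r j in
      if dim_vec u = dim_vec w then a \<cdot>\<^sub>v u + c \<cdot>\<^sub>v w else 0\<^sub>v (dim_vec u))"
| "step A B f r (MulA i) = mat_app A (get_reg r i)"
| "step A B f r (MulAt i) = mat_app (transpose_mat A) (get_reg r i)"
| "step A B f r (MulB i) = mat_app B (get_reg r i)"
| "step A B f r (MulBt i) = mat_app (transpose_mat B) (get_reg r i)"
| "step A B f r (CallF i) = f (get_reg r i)"

text \<open>Cost of one instruction: a vector operation costs the length of the vectors; one
  application of A or A^T costs cA, of B or B^T costs cB; calls of f are counted separately.\<close>
fun instr_cost :: "real \<Rightarrow> real \<Rightarrow> real vec list \<Rightarrow> instr \<Rightarrow> real" where
  "instr_cost cA cB r (LinComb a i c j) = real (dim_vec (get_reg r i))"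
| "instr_cost cA cB r (MulA i) = cA"
| "instr_cost cA cB r (MulAt i) = cA"
| "instr_cost cA cB r (MulB i) = cB"
| "instr_cost cA cB r (MulBt i) = cB"
| "instr_cost cA cB r (CallF i) = 0"

fun exec :: "real mat \<Rightarrow> real mat \<Rightarrow> (real vec \<Rightarrow> real vec) \<Rightarrow> instr list \<Rightarrow> real vec list \<Rightarrow> real vec list" where
  "exec A B f [] r = r"
| "exec A B f (ins # p) r = exec A B f p (r @ [step A B f r ins])"

fun exec_cost :: "real mat \<Rightarrow> real mat \<Rightarrow> (real vec \<Rightarrow> real vec) \<Rightarrow> real \<Rightarrow> real \<Rightarrow> instr list \<Rightarrow> real vec list \<Rightarrow> real" where
  "exec_cost A B f cA cB [] r = 0"
| "exec_cost A B f cA cB (ins # p) r =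
     instr_cost cA cB r ins + exec_cost A B f cA cB p (r @ [step A B f r ins])"

definition run_prog :: "real mat \<Rightarrow> real mat \<Rightarrow> (real vec \<Rightarrow> real vec) \<Rightarrow> instr list \<Rightarrow> real vec \<Rightarrow> real vec" where
  "run_prog A B f p b = last (exec A B f p [b])"

definition prog_cost :: "real mat \<Rightarrow> real mat \<Rightarrow> (real vec \<Rightarrow> real vec) \<Rightarrow> real \<Rightarrow> real \<Rightarrow> instr list \<Rightarrow> real vec \<Rightarrow> real" where
  "prog_cost A B f cA cB p b = exec_cost A B f cA cB p [b]"

fun is_call :: "instr \<Rightarrow> bool" where
  "is_call (CallF i) = True"
| "is_call _ = False"

definition num_calls :: "instr list \<Rightarrow> nat" where
  "num_calls p = length (filter is_call p)"

end

theory Submission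
  imports Defs "Jordan_Normal_Form.Determinant"
begin

lemma dot_self_nonneg: "0 \<le> (x::real vec) \<bullet> x"
  unfolding scalar_prod_def by (auto intro: sum_nonneg)

lemma dot_self_zero: "(x::real vec) \<bullet> x = 0 \<Longrightarrow> x \<in> carrier_vec k \<Longrightarrow> x = 0\<^sub>v k"
proof -
  assume h: "x \<bullet> x = 0" and x: "x \<in> carrier_vec k"
  have "(\<Sum>i\<in>{0..<dim_vec x}. x $ i * x $ i) = 0" using h unfolding scalar_prod_def by simp
  hence "\<forall>i\<in>{0..<dim_vec x}. x $ i * x $ i = 0"
    by (subst (asm) sum_nonneg_eq_0_iff) auto
  thus ?thesis using x by (intro eq_vecI) auto
qed

definition fm :: "real mat \<Rightarrow> real \<Rightarrow> real vec \<Rightarrow> real vec \<Rightarrow> real" where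
  "fm W c x y = (W *\<^sub>v x) \<bullet> (W *\<^sub>v y) + c * (x \<bullet> y)"

context fixes W :: "real mat" and m k :: nat and c :: real
  assumes W: "W \<in> carrier_mat m k" and c0: "0 \<le> c"
begin

lemma fm_sym: "x \<in> carrier_vec k \<Longrightarrow> y \<in> carrier_vec k \<Longrightarrow> fm W c x y = fm W c y x"
  unfolding fm_def using W by (simp add: comm_scalar_prod[of _ m] comm_scalar_prod[of _ k])

lemma fm_add_l: "x \<in> carrier_vec k \<Longrightarrow> y \<in> carrier_vec k \<Longrightarrow> z \<in> carrier_vec k \<Longrightarrow>
   fm W c (x + y) z = fm W c x z + fm W c y z"
  unfolding fm_def using W
  by (simp add: mult_add_distrib_mat_vec[OF W] add_scalar_prod_distrib[of _ m] add_scalar_prod_distrib[of _ k] algebra_simps)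

lemma fm_add_r: "x \<in> carrier_vec k \<Longrightarrow> y \<in> carrier_vec k \<Longrightarrow> z \<in> carrier_vec k \<Longrightarrow>
   fm W c z (x + y) = fm W c z x + fm W c z y"
  using fm_add_l fm_sym by simp

lemma fm_minus_l: "x \<in> carrier_vec k \<Longrightarrow> y \<in> carrier_vec k \<Longrightarrow> z \<in> carrier_vec k \<Longrightarrow>
   fm W c (x - y) z = fm W c x z - fm W c y z"
  unfolding fm_def using W
  by (simp add: mult_minus_distrib_mat_vec[OF W] minus_scalar_prod_distrib[of _ m] minus_scalar_prod_distrib[of _ k] algebra_simps)

lemma fm_minus_r: "x \<in> carrier_vec k \<Longrightarrow> y \<in> carrier_vec k \<Longrightarrow> z \<in> carrier_vec k \<Longrightarrow>
   fm W c z (x - y) = fm W c z x - fm W c z y"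
  using fm_minus_l fm_sym by simp

lemma fm_smult_l: "x \<in> carrier_vec k \<Longrightarrow> z \<in> carrier_vec k \<Longrightarrow>
   fm W c (a \<cdot>\<^sub>v x) z = a * fm W c x z"
  unfolding fm_def using W
  by (simp add: mult_mat_vec[OF W] algebra_simps)

lemma fm_smult_r: "x \<in> carrier_vec k \<Longrightarrow> z \<in> carrier_vec k \<Longrightarrow>
   fm W c z (a \<cdot>\<^sub>v x) = a * fm W c z x"
  using fm_smult_l fm_sym by simp

lemma fm_nonneg: "0 \<le> c \<Longrightarrow> 0 \<le> fm W c x x"
  unfolding fm_def using dot_self_nonneg[of x] dot_self_nonneg[of "W *\<^sub>v x"] by simp

lemma fm_ge_dot: "0 \<le> c \<Longrightarrow> c * (x \<bullet> x) \<le> fm W c x x"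
  unfolding fm_def using dot_self_nonneg[of "W *\<^sub>v x"] by simp

lemma fm_ge_W: "0 \<le> c \<Longrightarrow> (W *\<^sub>v x) \<bullet> (W *\<^sub>v x) \<le> fm W c x x"
  unfolding fm_def using dot_self_nonneg[of x] by simp

lemma fm_uminus_l: "x \<in> carrier_vec k \<Longrightarrow> z \<in> carrier_vec k \<Longrightarrow> fm W c (- x) z = - fm W c x z"
proof -
  assume x: "x \<in> carrier_vec k" and z: "z \<in> carrier_vec k"
  have "- x = (-1) \<cdot>\<^sub>v x" by (rule eq_vecI) auto
  thus ?thesis using fm_smult_l[OF x z, of "-1"] by simp
qed

lemma fm_cs: assumes c: "0 \<le> c" and x: "x \<in> carrier_vec k" and y: "y \<in> carrier_vec k"
  shows "(fm W c x y)\<^sup>2 \<le> fm W c x x * fm W c y y"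
proof -
  define a where "a = fm W c x x"
  define b where "b = fm W c x y"
  define e where "e = fm W c y y"
  have q: "0 \<le> a - 2 * t * b + t\<^sup>2 * e" for t
  proof -
    have "0 \<le> fm W c (x - t \<cdot>\<^sub>v y) (x - t \<cdot>\<^sub>v y)" by (rule fm_nonneg[OF c])
    also have "\<dots> = a - 2 * t * b + t\<^sup>2 * e"
      using x y unfolding a_def b_def e_def
      by (simp add: fm_minus_l fm_minus_r fm_smult_l fm_smult_r fm_sym[of y x] power2_eq_square algebra_simps)
    finally show ?thesis .
  qed
  have e0: "0 \<le> e" unfolding e_def by (rule fm_nonneg[OF c])
  show ?thesis
  proof (cases "e = 0")
    case True
    have "b = 0"
    proof (rule ccontr)
      assume "b \<noteq> 0"
      have "0 \<le> a - 2 * ((a + 1) / (2 * b)) * b" using q[of "(a+1)/(2*b)"] True by simp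
      also have "\<dots> = -1" using \<open>b \<noteq> 0\<close> by (simp add: field_simps)
      finally show False by simp
    qed
    thus ?thesis using True unfolding a_def b_def e_def by simp
  next
    case False
    hence ep: "0 < e" using e0 by simp
    have "0 \<le> a - 2 * (b / e) * b + (b/e)\<^sup>2 * e" by (rule q)
    also have "\<dots> = a - b\<^sup>2 / e" using ep by (simp add: field_simps power2_eq_square)
    finally have "b\<^sup>2 / e \<le> a" by simp
    hence "b\<^sup>2 \<le> a * e" using ep by (simp add: field_simps)
    thus ?thesis unfolding a_def b_def e_def .
  qed
qed

definition nf :: "real vec \<Rightarrow> real" where "nf x = sqrt (fm W c x x)"

lemma nf_nonneg: "0 \<le> nf x" unfolding nf_def using fm_nonneg[OF c0] by simp

lemma nf_sq: assumes c: "0 \<le> c" shows "(nf x)\<^sup>2 = fm W c x x"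
  unfolding nf_def using fm_nonneg[OF c] by simp

lemma fm_le_nf: assumes c: "0 \<le> c" and x: "x \<in> carrier_vec k" and y: "y \<in> carrier_vec k"
  shows "fm W c x y \<le> nf x * nf y"
proof -
  have e: "(nf x * nf y)\<^sup>2 = fm W c x x * fm W c y y"
    by (simp only: power_mult_distrib nf_sq[OF c])
  have "(fm W c x y)\<^sup>2 \<le> (nf x * nf y)\<^sup>2"
    unfolding e by (rule fm_cs[OF c x y])
  moreover have "0 \<le> nf x * nf y" using nf_nonneg[of x] nf_nonneg[of y] by (rule mult_nonneg_nonneg)
  ultimately show ?thesis by (rule power2_le_imp_le)
qed

lemma nf_smult: assumes c: "0 \<le> c" and x: "x \<in> carrier_vec k"
  shows "nf (a \<cdot>\<^sub>v x) = \<bar>a\<bar> * nf x"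
proof -
  have "fm W c (a \<cdot>\<^sub>v x) (a \<cdot>\<^sub>v x) = a\<^sup>2 * fm W c x x"
    using x by (simp add: fm_smult_l fm_smult_r power2_eq_square)
  thus ?thesis unfolding nf_def by (simp only: real_sqrt_mult real_sqrt_abs)
qed

lemma nf_add: assumes c: "0 \<le> c" and x: "x \<in> carrier_vec k" and y: "y \<in> carrier_vec k"
  shows "nf (x + y) \<le> nf x + nf y"
proof -
  have "(nf (x + y))\<^sup>2 = fm W c x x + 2 * fm W c x y + fm W c y y"
    using x y nf_sq[OF c] by (simp add: fm_add_l fm_add_r fm_sym[of y x])
  also have "\<dots> \<le> (nf x)\<^sup>2 + 2 * (nf x * nf y) + (nf y)\<^sup>2"
    using fm_le_nf[OF c x y] nf_sq[OF c] by simp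
  also have "\<dots> = (nf x + nf y)\<^sup>2" by (simp add: power2_eq_square algebra_simps)
  finally have "(nf (x + y))\<^sup>2 \<le> (nf x + nf y)\<^sup>2" .
  moreover have "0 \<le> nf x + nf y" using nf_nonneg[of x] nf_nonneg[of y] by (rule add_nonneg_nonneg)
  ultimately show ?thesis by (rule power2_le_imp_le)
qed

lemma nf_minus: assumes c: "0 \<le> c" and x: "x \<in> carrier_vec k" and y: "y \<in> carrier_vec k"
  shows "nf (x - y) \<le> nf x + nf y"
proof -
  have "(nf (x - y))\<^sup>2 = fm W c x x - 2 * fm W c x y + fm W c y y"
    using x y nf_sq[OF c] by (simp add: fm_minus_l fm_minus_r fm_sym[of y x])
  also have "\<dots> \<le> (nf x)\<^sup>2 + 2 * (nf x * nf y) + (nf y)\<^sup>2"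
  proof -
    have "- fm W c x y = fm W c x ((-1) \<cdot>\<^sub>v y)" using x y by (simp add: fm_smult_r)
    also have "\<dots> \<le> nf x * nf ((-1) \<cdot>\<^sub>v y)" using fm_le_nf[OF c x, of "(-1) \<cdot>\<^sub>v y"] y by simp
    also have "nf ((-1) \<cdot>\<^sub>v y) = nf y" using nf_smult[OF c y, of "-1"] by simp
    finally have "- fm W c x y \<le> nf x * nf y" .
    thus ?thesis using nf_sq[OF c] by simp
  qed
  also have "\<dots> = (nf x + nf y)\<^sup>2" by (simp add: power2_eq_square algebra_simps)
  finally have "(nf (x - y))\<^sup>2 \<le> (nf x + nf y)\<^sup>2" .
  moreover have "0 \<le> nf x + nf y" using nf_nonneg[of x] nf_nonneg[of y] by (rule add_nonneg_nonneg)
  ultimately show ?thesis by (rule power2_le_imp_le)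
qed

lemma nf_le_iff: assumes c: "0 \<le> c" and r: "0 \<le> r"
  shows "nf x \<le> r * nf y \<longleftrightarrow> fm W c x x \<le> r\<^sup>2 * fm W c y y"
proof -
  have "nf x \<le> r * nf y \<longleftrightarrow> (nf x)\<^sup>2 \<le> (r * nf y)\<^sup>2"
  proof
    assume "nf x \<le> r * nf y" thus "(nf x)\<^sup>2 \<le> (r * nf y)\<^sup>2"
      using nf_nonneg[of x] by (rule power_mono)
  next
    assume "(nf x)\<^sup>2 \<le> (r * nf y)\<^sup>2" thus "nf x \<le> r * nf y"
      using mult_nonneg_nonneg[OF r nf_nonneg[of y]] by (rule power2_le_imp_le)
  qed
  thus ?thesis using nf_sq[OF c] by (simp add: power_mult_distrib)
qed

lemma polar:
  assumes c: "0 \<le> c" and h: "0 < h"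
    and XV: "\<And>x. x \<in> carrier_vec k \<Longrightarrow> X x \<in> carrier_vec k"
    and Xadd: "\<And>x y. x \<in> carrier_vec k \<Longrightarrow> y \<in> carrier_vec k \<Longrightarrow> X (x + y) = X x + X y"
    and Xmin: "\<And>x y. x \<in> carrier_vec k \<Longrightarrow> y \<in> carrier_vec k \<Longrightarrow> X (x - y) = X x - X y"
    and Xsa: "\<And>x y. x \<in> carrier_vec k \<Longrightarrow> y \<in> carrier_vec k \<Longrightarrow> fm W c (X x) y = fm W c x (X y)"
    and Xb: "\<And>x. x \<in> carrier_vec k \<Longrightarrow> \<bar>fm W c (X x) x\<bar> \<le> h * fm W c x x"
    and x: "x \<in> carrier_vec k"
  shows "fm W c (X x) (X x) \<le> h\<^sup>2 * fm W c x x"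
proof -
  define y where "y = (1/h) \<cdot>\<^sub>v X x"
  have y: "y \<in> carrier_vec k" unfolding y_def using XV[OF x] by simp
  have Xy: "X y \<in> carrier_vec k" using XV[OF y] .
  have Xx: "X x \<in> carrier_vec k" using XV[OF x] .
  define a where "a = fm W c x x"
  define e where "e = fm W c (X x) (X x)"
  have sxy: "fm W c (X y) x = fm W c (X x) y" using Xsa[OF y x] fm_sym[OF y Xx] by simp
  have p1: "fm W c (X (x + y)) (x + y) = fm W c (X x) x + 2 * fm W c (X x) y + fm W c (X y) y"
    using x y Xx Xy sxy by (simp add: Xadd fm_add_l fm_add_r)
  have p2: "fm W c (X (x - y)) (x - y) = fm W c (X x) x - 2 * fm W c (X x) y + fm W c (X y) y"
    using x y Xx Xy sxy by (simp add: Xmin fm_minus_l fm_minus_r)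
  have s1: "fm W c (x + y) (x + y) + fm W c (x - y) (x - y) = 2 * a + 2 * fm W c y y"
    using x y unfolding a_def by (simp add: fm_add_l fm_add_r fm_minus_l fm_minus_r fm_sym[of y x])
  have b1: "fm W c (X (x + y)) (x + y) \<le> h * fm W c (x + y) (x + y)"
    using Xb[of "x + y"] x y by simp
  have b2: "- h * fm W c (x - y) (x - y) \<le> fm W c (X (x - y)) (x - y)"
    using Xb[of "x - y"] x y by simp
  have hs: "h * fm W c (x + y) (x + y) + h * fm W c (x - y) (x - y) = h * (2 * a + 2 * fm W c y y)"
    using s1 by (metis distrib_left)
  have "4 * fm W c (X x) y \<le> h * (2 * a + 2 * fm W c y y)"
    using b1 b2 p1 p2 hs by linarith
  moreover have "fm W c (X x) y = e / h" unfolding y_def e_def using Xx by (simp add: fm_smult_r)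
  moreover have "fm W c y y = e / h\<^sup>2" unfolding y_def e_def using Xx
    by (simp add: fm_smult_r fm_smult_l power2_eq_square)
  ultimately have st: "4 * (e / h) \<le> h * (2 * a + 2 * (e / h\<^sup>2))" by simp
  have "h * (2 * a + 2 * (e / h\<^sup>2)) = 2 * h * a + 2 * (e / h)"
    using h by (simp add: power2_eq_square field_simps)
  with st have "e / h \<le> h * a" by linarith
  hence "e \<le> h * a * h" using h by (simp add: divide_le_eq)
  hence "e \<le> h\<^sup>2 * a" by (simp add: power2_eq_square algebra_simps)
  thus ?thesis unfolding e_def a_def .
qed

end

lemma smult_mat_mult_vec: "M \<in> carrier_mat m k \<Longrightarrow> v \<in> carrier_vec k \<Longrightarrow>
  (a \<cdot>\<^sub>m M) *\<^sub>v v = a \<cdot>\<^sub>v ((M :: real mat) *\<^sub>v v)"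
  by (rule eq_vecI) (auto simp: scalar_prod_def sum_distrib_left mult.assoc)

lemma qform_smult: "K \<in> carrier_mat k k \<Longrightarrow> x \<in> carrier_vec k \<Longrightarrow> qform (a \<cdot>\<^sub>m K) x = a * qform K x"
  unfolding qform_def by (simp add: smult_mat_mult_vec)

lemma dot_cs: assumes x: "(x::real vec) \<in> carrier_vec k" and y: "y \<in> carrier_vec k"
  shows "(x \<bullet> y)\<^sup>2 \<le> (x \<bullet> x) * (y \<bullet> y)"
proof -
  have W: "(0\<^sub>m 0 k :: real mat) \<in> carrier_mat 0 k" by simp
  have e: "fm (0\<^sub>m 0 k) 1 u v = u \<bullet> v" for u v
    unfolding fm_def by (simp add: scalar_prod_def)
  show ?thesis using fm_cs[OF W, of 1 x y] x y unfolding e by simp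
qed

lemma mat_form: assumes W: "W \<in> carrier_mat m k" and x: "x \<in> carrier_vec k" and y: "y \<in> carrier_vec k"
  shows "x \<bullet> ((transpose_mat W * W + c \<cdot>\<^sub>m 1\<^sub>m k) *\<^sub>v y) = fm W c x y"
proof -
  have "(transpose_mat W * W + c \<cdot>\<^sub>m 1\<^sub>m k) *\<^sub>v y = transpose_mat W *\<^sub>v (W *\<^sub>v y) + c \<cdot>\<^sub>v y"
    using W y by (simp add: add_mult_distrib_mat_vec[of _ k k] smult_mat_mult_vec[of _ k k])
  moreover have "x \<bullet> (transpose_mat W *\<^sub>v (W *\<^sub>v y)) = (W *\<^sub>v x) \<bullet> (W *\<^sub>v y)"
  proof -
    have "x \<bullet> (transpose_mat W *\<^sub>v (W *\<^sub>v y)) = (transpose_mat W *\<^sub>v (W *\<^sub>v y)) \<bullet> x"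
      using W x y by (intro comm_scalar_prod[of _ k]) auto
    also have "\<dots> = (W *\<^sub>v y) \<bullet> (W *\<^sub>v x)" using W x y by (intro transpose_vec_mult_scalar) auto
    also have "\<dots> = (W *\<^sub>v x) \<bullet> (W *\<^sub>v y)" using W x y by (intro comm_scalar_prod[of _ m]) auto
    finally show ?thesis .
  qed
  ultimately show ?thesis unfolding fm_def using W x y
    by (simp add: scalar_prod_add_distrib[of _ k])
qed

lemma mat_form_carrier: "W \<in> carrier_mat m k \<Longrightarrow> transpose_mat W * W + c \<cdot>\<^sub>m 1\<^sub>m k \<in> carrier_mat k k"
  by auto

lemma transpose_bound: assumes W: "(W::real mat) \<in> carrier_mat m k" and g: "0 \<le> g"
  and b: "\<And>v. v \<in> carrier_vec k \<Longrightarrow> (W *\<^sub>v v) \<bullet> (W *\<^sub>v v) \<le> g * (v \<bullet> v)"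
  and w: "w \<in> carrier_vec m"
  shows "(transpose_mat W *\<^sub>v w) \<bullet> (transpose_mat W *\<^sub>v w) \<le> g * (w \<bullet> w)"
proof -
  define u where "u = transpose_mat W *\<^sub>v w"
  have u: "u \<in> carrier_vec k" unfolding u_def using W w by simp
  have "u \<bullet> u = w \<bullet> (W *\<^sub>v u)" unfolding u_def using W w u[unfolded u_def]
    by (intro transpose_vec_mult_scalar) auto
  hence "(u \<bullet> u)\<^sup>2 \<le> (w \<bullet> w) * ((W *\<^sub>v u) \<bullet> (W *\<^sub>v u))"
    using dot_cs[OF w, of "W *\<^sub>v u"] W u by simp
  also have "\<dots> \<le> (w \<bullet> w) * (g * (u \<bullet> u))"
    using b[OF u] dot_self_nonneg[of w] by (rule mult_left_mono)
  finally have h: "(u \<bullet> u) * (u \<bullet> u) \<le> (g * (w \<bullet> w)) * (u \<bullet> u)"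
    by (simp add: power2_eq_square algebra_simps)
  show ?thesis
  proof (cases "u \<bullet> u = 0")
    case True thus ?thesis using g dot_self_nonneg[of w] unfolding u_def by simp
  next
    case False
    hence "0 < u \<bullet> u" using dot_self_nonneg[of u] by simp
    thus ?thesis using h unfolding u_def[symmetric] by simp
  qed
qed

context fixes W :: "real mat" and m k :: nat and c :: real
  assumes W: "W \<in> carrier_mat m k" and c: "0 < c"
begin

definition KK where "KK = transpose_mat W * W + c \<cdot>\<^sub>m 1\<^sub>m k"
definition Ki where "Ki = mat_inv KK"

lemma KK: "KK \<in> carrier_mat k k" unfolding KK_def using W by auto

lemma KK_form: "x \<in> carrier_vec k \<Longrightarrow> y \<in> carrier_vec k \<Longrightarrow> x \<bullet> (KK *\<^sub>v y) = fm W c x y"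
  unfolding KK_def by (rule mat_form[OF W])

lemma KK_inv: "KK * Ki = 1\<^sub>m k \<and> Ki * KK = 1\<^sub>m k \<and> Ki \<in> carrier_mat k k"
proof -
  have "det KK \<noteq> 0"
  proof
    assume "det KK = 0"
    then obtain v where v: "v \<in> carrier_vec k" "v \<noteq> 0\<^sub>v k" "KK *\<^sub>v v = 0\<^sub>v k"
      using det_0_iff_vec_prod_zero[OF KK] by auto
    have "fm W c v v = 0" using KK_form[OF v(1) v(1)] v by simp
    hence "c * (v \<bullet> v) \<le> 0" using fm_ge_dot[OF W, of c v] c by simp
    hence "v \<bullet> v = 0" using c dot_self_nonneg[of v] by (simp add: mult_le_0_iff)
    thus False using dot_self_zero[of v k] v by simp
  qed
  hence "KK \<in> Units (ring_mat TYPE(real) k undefined)" by (rule det_non_zero_imp_unit[OF KK])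
  hence "mat_inverse KK \<noteq> None" using mat_inverse(1)[OF KK, of undefined] by blast
  then obtain X where X: "mat_inverse KK = Some X" by auto
  thus ?thesis unfolding Ki_def mat_inv_def using mat_inverse(2)[OF KK X] by simp
qed

lemma Ki: "Ki \<in> carrier_mat k k" using KK_inv by simp

lemma Ki_left: "x \<in> carrier_vec k \<Longrightarrow> Ki *\<^sub>v (KK *\<^sub>v x) = x"
  using KK_inv KK by (simp flip: assoc_mult_mat_vec[of Ki k k KK k x])

lemma Ki_right: "x \<in> carrier_vec k \<Longrightarrow> KK *\<^sub>v (Ki *\<^sub>v x) = x"
  using KK_inv KK by (simp flip: assoc_mult_mat_vec[of KK k k Ki k x])

lemma Ki_carrier: "x \<in> carrier_vec k \<Longrightarrow> Ki *\<^sub>v x \<in> carrier_vec k" using Ki by simp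

lemma Ki_sym: assumes x: "x \<in> carrier_vec k" and y: "y \<in> carrier_vec k"
  shows "x \<bullet> (Ki *\<^sub>v y) = y \<bullet> (Ki *\<^sub>v x)"
proof -
  have "x \<bullet> (Ki *\<^sub>v y) = (KK *\<^sub>v (Ki *\<^sub>v x)) \<bullet> (Ki *\<^sub>v y)" using Ki_right[OF x] by simp
  also have "\<dots> = (Ki *\<^sub>v y) \<bullet> (KK *\<^sub>v (Ki *\<^sub>v x))"
    using x y Ki KK by (intro comm_scalar_prod[of _ k]) auto
  also have "\<dots> = fm W c (Ki *\<^sub>v y) (Ki *\<^sub>v x)" using x y by (intro KK_form Ki_carrier)
  also have "\<dots> = fm W c (Ki *\<^sub>v x) (Ki *\<^sub>v y)" using x y W by (intro fm_sym[OF W] Ki_carrier) (use c in auto)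
  also have "\<dots> = (Ki *\<^sub>v x) \<bullet> (KK *\<^sub>v (Ki *\<^sub>v y))" using x y by (intro KK_form[symmetric] Ki_carrier)
  also have "\<dots> = (Ki *\<^sub>v x) \<bullet> y" using Ki_right[OF y] by simp
  also have "\<dots> = y \<bullet> (Ki *\<^sub>v x)" using x y Ki by (intro comm_scalar_prod[of _ k]) auto
  finally show ?thesis .
qed

lemma Ki_form: assumes x: "x \<in> carrier_vec k"
  shows "x \<bullet> (Ki *\<^sub>v x) = fm W c (Ki *\<^sub>v x) (Ki *\<^sub>v x)"
proof -
  have "x \<bullet> (Ki *\<^sub>v x) = (Ki *\<^sub>v x) \<bullet> x" using x Ki by (intro comm_scalar_prod[of _ k]) auto
  also have "\<dots> = (Ki *\<^sub>v x) \<bullet> (KK *\<^sub>v (Ki *\<^sub>v x))" using Ki_right[OF x] by simp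
  also have "\<dots> = fm W c (Ki *\<^sub>v x) (Ki *\<^sub>v x)" using x by (intro KK_form Ki_carrier)
  finally show ?thesis .
qed

end

lemma KK_mult: "W \<in> carrier_mat m k \<Longrightarrow> 0 < c \<Longrightarrow> y \<in> carrier_vec k \<Longrightarrow>
  KK W k c *\<^sub>v y = transpose_mat W *\<^sub>v (W *\<^sub>v y) + c \<cdot>\<^sub>v y"
  by (simp add: KK_def add_mult_distrib_mat_vec[of _ k k] smult_mat_mult_vec[of _ k k])

lemma vnorm_sq: "(vnorm v)\<^sup>2 = v \<bullet> v"
  unfolding vnorm_def using dot_self_nonneg[of v] by simp

lemma matvec_sq_bound: assumes M: "(M::real mat) \<in> carrier_mat m k" and v: "v \<in> carrier_vec k"
  shows "(M *\<^sub>v v) \<bullet> (M *\<^sub>v v) \<le> (\<Sum>i\<in>{0..<m}. row M i \<bullet> row M i) * (v \<bullet> v)"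
proof -
  have "(M *\<^sub>v v) \<bullet> (M *\<^sub>v v) = (\<Sum>i\<in>{0..<m}. (row M i \<bullet> v)\<^sup>2)"
    using M unfolding scalar_prod_def[of "M *\<^sub>v v"] by (simp add: power2_eq_square)
  also have "\<dots> \<le> (\<Sum>i\<in>{0..<m}. (row M i \<bullet> row M i) * (v \<bullet> v))"
    using M v by (intro sum_mono dot_cs[of _ k]) auto
  also have "\<dots> = (\<Sum>i\<in>{0..<m}. row M i \<bullet> row M i) * (v \<bullet> v)" by (simp add: sum_distrib_right)
  finally show ?thesis .
qed

lemma spec_norm_bound: assumes M: "(M::real mat) \<in> carrier_mat m k" and v: "v \<in> carrier_vec k"
  shows "(M *\<^sub>v v) \<bullet> (M *\<^sub>v v) \<le> (spec_norm M)\<^sup>2 * (v \<bullet> v)"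
proof (cases "v \<bullet> v = 0")
  case True
  hence v0: "v = 0\<^sub>v k" by (rule dot_self_zero[OF _ v])
  have "M *\<^sub>v v = 0\<^sub>v m" unfolding v0 using M
    by (intro eq_vecI) (auto simp: scalar_prod_def)
  thus ?thesis using True by simp
next
  case False
  define SS where "SS = {0} \<union> {vnorm (M *\<^sub>v v) | v. dim_vec v = dim_col M \<and> vnorm v = 1}"
  define F where "F = (\<Sum>i\<in>{0..<m}. row M i \<bullet> row M i)"
  have F0: "0 \<le> F" unfolding F_def by (intro sum_nonneg) (simp add: dot_self_nonneg)
  have bdd: "bdd_above SS"
  proof (rule bdd_aboveI[of _ "sqrt F"])
    fix x assume x: "x \<in> SS"
    show "x \<le> sqrt F"
    proof (cases "x = 0")
      case True thus ?thesis using F0 by simp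
    next
      case False
      then obtain w where w1: "x = vnorm (M *\<^sub>v w)" and w2: "dim_vec w = dim_col M" and w3: "vnorm w = 1"
        using x unfolding SS_def by blast
      have w: "w \<in> carrier_vec k" using w2 M unfolding carrier_vec_def carrier_mat_def by simp
      have "w \<bullet> w = 1" using w3 vnorm_sq[of w] by simp
      hence "(M *\<^sub>v w) \<bullet> (M *\<^sub>v w) \<le> F" using matvec_sq_bound[OF M w] unfolding F_def by simp
      thus ?thesis unfolding w1 vnorm_def by (rule real_sqrt_le_mono)
    qed
  qed
  have vp: "0 < v \<bullet> v" using False dot_self_nonneg[of v] by linarith
  define l where "l = sqrt (v \<bullet> v)"
  have l: "0 < l" unfolding l_def using vp by simp
  have l2: "v \<bullet> v = l * l" unfolding l_def using vp by simp
  define u where "u = (1 / l) \<cdot>\<^sub>v v"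
  have u: "u \<in> carrier_vec k" unfolding u_def using v by simp
  have "u \<bullet> u = (1/l) * ((1/l) * (v \<bullet> v))" unfolding u_def using v by simp
  also have "\<dots> = 1" unfolding l2 using l by simp
  finally have uu: "u \<bullet> u = 1" .
  have "vnorm u = 1" unfolding vnorm_def uu by simp
  moreover have "dim_vec u = dim_col M" using u M by simp
  ultimately have "vnorm (M *\<^sub>v u) \<in> SS" unfolding SS_def by blast
  hence le: "vnorm (M *\<^sub>v u) \<le> spec_norm M" unfolding spec_norm_def SS_def[symmetric]
    using bdd by (rule cSup_upper)
  have vn0: "0 \<le> vnorm (M *\<^sub>v u)" unfolding vnorm_def using dot_self_nonneg by simp
  have "(vnorm (M *\<^sub>v u))\<^sup>2 \<le> (spec_norm M)\<^sup>2"
    using le vn0 by (rule power_mono)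
  moreover have "M *\<^sub>v u = (1/l) \<cdot>\<^sub>v (M *\<^sub>v v)" unfolding u_def by (rule mult_mat_vec[OF M v])
  moreover have "((1/l) \<cdot>\<^sub>v (M *\<^sub>v v)) \<bullet> ((1/l) \<cdot>\<^sub>v (M *\<^sub>v v)) = (1/l) * ((1/l) * ((M *\<^sub>v v) \<bullet> (M *\<^sub>v v)))"
    using M v by simp
  ultimately have "(1/l) * ((1/l) * ((M *\<^sub>v v) \<bullet> (M *\<^sub>v v))) \<le> (spec_norm M)\<^sup>2"
    unfolding vnorm_sq by simp
  hence "((M *\<^sub>v v) \<bullet> (M *\<^sub>v v)) / (l * l) \<le> (spec_norm M)\<^sup>2" by (simp add: field_simps)
  hence "(M *\<^sub>v v) \<bullet> (M *\<^sub>v v) \<le> (spec_norm M)\<^sup>2 * (l * l)" using l by (simp add: divide_le_eq)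
  thus ?thesis unfolding l2 .
qed

locale setting =
  fixes n d s :: nat and A B :: "real mat" and \<nu> :: real
  assumes A: "A \<in> carrier_mat n d" and B: "B \<in> carrier_mat n s" and nu: "0 < \<nu>"
    and approx: "spectral_approx 4 (A * transpose_mat A + \<nu> \<cdot>\<^sub>m 1\<^sub>m n) (B * transpose_mat B + \<nu> \<cdot>\<^sub>m 1\<^sub>m n)"
begin

abbreviation "At \<equiv> transpose_mat A"
abbreviation "Bt \<equiv> transpose_mat B"
lemma At: "At \<in> carrier_mat d n" using A by simp
lemma Bt: "Bt \<in> carrier_mat s n" using B by simp
lemma nu0: "0 \<le> \<nu>" using nu by simp

definition "\<alpha> = (spec_norm A)\<^sup>2"
definition "\<kappa> = 1 + \<alpha> / \<nu>"
definition "\<beta> = 4 * \<alpha> + 3 * \<nu>"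

lemma alpha0: "0 \<le> \<alpha>" unfolding \<alpha>_def by simp

abbreviation "fQ \<equiv> fm Bt \<nu>"
abbreviation "fP \<equiv> fm At \<nu>"
abbreviation "fM \<equiv> fm A \<nu>"
abbreviation "fN \<equiv> fm B \<nu>"
abbreviation "nQ \<equiv> nf Bt \<nu>"

definition "Qv w = B *\<^sub>v (Bt *\<^sub>v w) + \<nu> \<cdot>\<^sub>v w"
definition "Pv w = A *\<^sub>v (At *\<^sub>v w) + \<nu> \<cdot>\<^sub>v w"
definition "Mv x = At *\<^sub>v (A *\<^sub>v x) + \<nu> \<cdot>\<^sub>v x"
definition "Nv x = Bt *\<^sub>v (B *\<^sub>v x) + \<nu> \<cdot>\<^sub>v x"

abbreviation "Mm \<equiv> KK A d \<nu>"
abbreviation "Mi \<equiv> Ki A d \<nu>"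
abbreviation "Nm \<equiv> KK B s \<nu>"
abbreviation "Ni \<equiv> Ki B s \<nu>"
abbreviation "Pm \<equiv> KK At n \<nu>"
abbreviation "Pinv \<equiv> Ki At n \<nu>"
abbreviation "Qm \<equiv> KK Bt n \<nu>"

lemma Qv_carrier[simp]: "w \<in> carrier_vec n \<Longrightarrow> Qv w \<in> carrier_vec n" unfolding Qv_def using B by simp
lemma Pv_carrier[simp]: "w \<in> carrier_vec n \<Longrightarrow> Pv w \<in> carrier_vec n" unfolding Pv_def using A by simp
lemma Mv_carrier[simp]: "w \<in> carrier_vec d \<Longrightarrow> Mv w \<in> carrier_vec d" unfolding Mv_def using A by simp
lemma Nv_carrier[simp]: "w \<in> carrier_vec s \<Longrightarrow> Nv w \<in> carrier_vec s" unfolding Nv_def using B by simp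

lemma Qm_mult: "w \<in> carrier_vec n \<Longrightarrow> Qm *\<^sub>v w = Qv w"
  using KK_mult[OF Bt nu] unfolding Qv_def by simp
lemma Pm_mult: "w \<in> carrier_vec n \<Longrightarrow> Pm *\<^sub>v w = Pv w"
  using KK_mult[OF At nu] unfolding Pv_def by simp
lemma Mm_mult: "w \<in> carrier_vec d \<Longrightarrow> Mm *\<^sub>v w = Mv w"
  using KK_mult[OF A nu] unfolding Mv_def by simp
lemma Nm_mult: "w \<in> carrier_vec s \<Longrightarrow> Nm *\<^sub>v w = Nv w"
  using KK_mult[OF B nu] unfolding Nv_def by simp

lemma fQ_Qv: "x \<in> carrier_vec n \<Longrightarrow> y \<in> carrier_vec n \<Longrightarrow> fQ x y = x \<bullet> Qv y"
  using KK_form[OF Bt nu] Qm_mult by simp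
lemma fP_Pv: "x \<in> carrier_vec n \<Longrightarrow> y \<in> carrier_vec n \<Longrightarrow> fP x y = x \<bullet> Pv y"
  using KK_form[OF At nu] Pm_mult by simp
lemma fM_Mv: "x \<in> carrier_vec d \<Longrightarrow> y \<in> carrier_vec d \<Longrightarrow> fM x y = x \<bullet> Mv y"
  using KK_form[OF A nu] Mm_mult by simp
lemma fN_Nv: "x \<in> carrier_vec s \<Longrightarrow> y \<in> carrier_vec s \<Longrightarrow> fN x y = x \<bullet> Nv y"
  using KK_form[OF B nu] Nm_mult by simp

lemma Mi_carrier[simp]: "x \<in> carrier_vec d \<Longrightarrow> Mi *\<^sub>v x \<in> carrier_vec d"
  using Ki_carrier[OF A nu] by simp
lemma Ni_carrier[simp]: "x \<in> carrier_vec s \<Longrightarrow> Ni *\<^sub>v x \<in> carrier_vec s"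
  using Ki_carrier[OF B nu] by simp
lemma Pi_carrier[simp]: "x \<in> carrier_vec n \<Longrightarrow> Pinv *\<^sub>v x \<in> carrier_vec n"
  using Ki_carrier[OF At nu] by simp

lemma Mv_Mi: "x \<in> carrier_vec d \<Longrightarrow> Mv (Mi *\<^sub>v x) = x"
  using Ki_right[OF A nu] Mm_mult by (metis Mi_carrier)
lemma Mi_Mv: "x \<in> carrier_vec d \<Longrightarrow> Mi *\<^sub>v (Mv x) = x"
  using Ki_left[OF A nu] Mm_mult by metis
lemma Nv_Ni: "x \<in> carrier_vec s \<Longrightarrow> Nv (Ni *\<^sub>v x) = x"
  using Ki_right[OF B nu] Nm_mult by (metis Ni_carrier)
lemma Pv_Pi: "x \<in> carrier_vec n \<Longrightarrow> Pv (Pinv *\<^sub>v x) = x"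
  using Ki_right[OF At nu] Pm_mult by (metis Pi_carrier)
lemma Pi_Pv: "x \<in> carrier_vec n \<Longrightarrow> Pinv *\<^sub>v (Pv x) = x"
  using Ki_left[OF At nu] Pm_mult by metis

lemma hyp: assumes x: "x \<in> carrier_vec n"
  shows "fQ x x \<le> 4 * fP x x" "fP x x \<le> 4 * fQ x x"
proof -
  have Qe: "B * Bt + \<nu> \<cdot>\<^sub>m 1\<^sub>m n = Qm" using KK_def[OF Bt nu] by simp
  have Pe: "A * At + \<nu> \<cdot>\<^sub>m 1\<^sub>m n = Pm" using KK_def[OF At nu] by simp
  have Qc: "Qm \<in> carrier_mat n n" using KK[OF Bt nu] .
  have Pc: "Pm \<in> carrier_mat n n" using KK[OF At nu] .
  from approx[unfolded spectral_approx_def Qe Pe loewner_le_def]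
  have 1: "qform ((1/4) \<cdot>\<^sub>m Qm) x \<le> qform Pm x" and 2: "qform Pm x \<le> qform (4 \<cdot>\<^sub>m Qm) x"
    using x Qc by auto
  have q: "qform Qm x = fQ x x" unfolding qform_def using KK_form[OF Bt nu x x] .
  have p: "qform Pm x = fP x x" unfolding qform_def using KK_form[OF At nu x x] .
  from 1 2 show "fQ x x \<le> 4 * fP x x" "fP x x \<le> 4 * fQ x x"
    unfolding qform_smult[OF Qc x] q p by auto
qed

lemma A_bound: "v \<in> carrier_vec d \<Longrightarrow> (A *\<^sub>v v) \<bullet> (A *\<^sub>v v) \<le> \<alpha> * (v \<bullet> v)"
  unfolding \<alpha>_def by (rule spec_norm_bound[OF A])

lemma At_bound: "w \<in> carrier_vec n \<Longrightarrow> (At *\<^sub>v w) \<bullet> (At *\<^sub>v w) \<le> \<alpha> * (w \<bullet> w)"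
  by (rule transpose_bound[OF A alpha0 A_bound])

lemma Bt_bound: assumes w: "w \<in> carrier_vec n" shows "(Bt *\<^sub>v w) \<bullet> (Bt *\<^sub>v w) \<le> \<beta> * (w \<bullet> w)"
proof -
  have "fQ w w \<le> 4 * fP w w" using hyp[OF w] by simp
  hence "(Bt *\<^sub>v w) \<bullet> (Bt *\<^sub>v w) + \<nu> * (w \<bullet> w) \<le> 4 * ((At *\<^sub>v w) \<bullet> (At *\<^sub>v w) + \<nu> * (w \<bullet> w))"
    unfolding fm_def .
  thus ?thesis using At_bound[OF w] unfolding \<beta>_def by (simp add: algebra_simps)
qed

lemma beta0: "0 \<le> \<beta>" unfolding \<beta>_def using alpha0 nu by simp

lemma B_bound: "v \<in> carrier_vec s \<Longrightarrow> (B *\<^sub>v v) \<bullet> (B *\<^sub>v v) \<le> \<beta> * (v \<bullet> v)"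
  using transpose_bound[OF Bt beta0 Bt_bound] by simp

end

lemma vec_eqI_carrier: "a \<in> carrier_vec k \<Longrightarrow> b \<in> carrier_vec k \<Longrightarrow> (\<And>i. i < k \<Longrightarrow> a $ i = b $ i) \<Longrightarrow> a = b"
  by (rule eq_vecI) auto

context setting begin

lemma Pinv: "Pinv \<in> carrier_mat n n" using Ki[OF At nu] .
lemma Qm: "Qm \<in> carrier_mat n n" using KK[OF Bt nu] .

lemma Qv_add: "x \<in> carrier_vec n \<Longrightarrow> y \<in> carrier_vec n \<Longrightarrow> Qv (x + y) = Qv x + Qv y"
  using Qm by (simp add: Qm_mult[symmetric] mult_add_distrib_mat_vec[OF Qm])
lemma Qv_minus: "x \<in> carrier_vec n \<Longrightarrow> y \<in> carrier_vec n \<Longrightarrow> Qv (x - y) = Qv x - Qv y"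
  using Qm by (simp add: Qm_mult[symmetric] mult_minus_distrib_mat_vec[OF Qm])

definition "S w = Pinv *\<^sub>v Qv w"

lemma S_carrier[simp]: "w \<in> carrier_vec n \<Longrightarrow> S w \<in> carrier_vec n"
  unfolding S_def by simp
lemma S_dim[simp]: "w \<in> carrier_vec n \<Longrightarrow> dim_vec (S w) = n"
  using S_carrier[of w] by (simp del: S_carrier)

lemma S_add: "x \<in> carrier_vec n \<Longrightarrow> y \<in> carrier_vec n \<Longrightarrow> S (x + y) = S x + S y"
  unfolding S_def by (simp add: Qv_add mult_add_distrib_mat_vec[OF Pinv])
lemma S_minus: "x \<in> carrier_vec n \<Longrightarrow> y \<in> carrier_vec n \<Longrightarrow> S (x - y) = S x - S y"
  unfolding S_def by (simp add: Qv_minus mult_minus_distrib_mat_vec[OF Pinv])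

lemmas fQsym = fm_sym[OF Bt nu0]
lemmas fPsym = fm_sym[OF At nu0]

lemma S_sa: assumes x: "x \<in> carrier_vec n" and y: "y \<in> carrier_vec n"
  shows "fQ (S x) y = fQ x (S y)"
proof -
  have "fQ (S x) y = (Pinv *\<^sub>v Qv x) \<bullet> Qv y" unfolding S_def using x y by (simp add: fQ_Qv)
  also have "\<dots> = Qv y \<bullet> (Pinv *\<^sub>v Qv x)" using x y by (intro comm_scalar_prod[of _ n]) auto
  also have "\<dots> = Qv x \<bullet> (Pinv *\<^sub>v Qv y)" using x y by (intro Ki_sym[OF At nu]) auto
  also have "\<dots> = (Pinv *\<^sub>v Qv y) \<bullet> Qv x" using x y by (intro comm_scalar_prod[of _ n]) auto
  also have "\<dots> = fQ (S y) x" unfolding S_def using x y by (simp add: fQ_Qv)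
  also have "\<dots> = fQ x (S y)" using x y by (intro fQsym) auto
  finally show ?thesis .
qed

lemma S_range: assumes z: "z \<in> carrier_vec n"
  shows "(1/4) * fQ z z \<le> fQ (S z) z" "fQ (S z) z \<le> 4 * fQ z z"
proof -
  define g where "g = S z"
  have g: "g \<in> carrier_vec n" unfolding g_def using z by simp
  have Pg: "Pv g = Qv z" unfolding g_def S_def using z by (simp add: Pv_Pi)
  have e1: "fQ g z = fP g g" using g z by (simp add: fQ_Qv fP_Pv Pg)
  have e2: "fP g z = fQ z z"
  proof -
    have "fP g z = fP z g" using g z by (intro fPsym) auto
    also have "\<dots> = fQ z z" using g z by (simp add: fQ_Qv fP_Pv Pg)
    finally show ?thesis .
  qed
  have p0: "0 \<le> fP g g" by (rule fm_nonneg[OF At nu0 nu0])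
  have q0: "0 \<le> fQ z z" by (rule fm_nonneg[OF Bt nu0 nu0])
  have "(fQ g z)\<^sup>2 \<le> fQ g g * fQ z z" by (rule fm_cs[OF Bt nu0 nu0 g z])
  also have "\<dots> \<le> (4 * fP g g) * fQ z z" using hyp(1)[OF g] q0 by (rule mult_right_mono)
  finally have "fP g g * fP g g \<le> (4 * fQ z z) * fP g g" unfolding e1 by (simp add: power2_eq_square algebra_simps)
  hence up: "fP g g \<le> 4 * fQ z z"
    using p0 q0 by (cases "fP g g = 0") auto
  have "0 \<le> fP (g - (1/4) \<cdot>\<^sub>v z) (g - (1/4) \<cdot>\<^sub>v z)" by (rule fm_nonneg[OF At nu0 nu0])
  also have "\<dots> = fP g g - (1/2) * fP g z + (1/16) * fP z z"
    using g z by (simp add: fm_minus_l[OF At nu0] fm_minus_r[OF At nu0] fm_smult_l[OF At nu0] fm_smult_r[OF At nu0] fPsym[of z g]) (simp add: field_simps)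
  finally have "(1/2) * fQ z z - (1/16) * fP z z \<le> fP g g" unfolding e2 by simp
  moreover have "fP z z \<le> 4 * fQ z z" using hyp(2)[OF z] .
  ultimately have "(1/4) * fQ z z \<le> fP g g" by simp
  thus "(1/4) * fQ z z \<le> fQ (S z) z" using e1 unfolding g_def by simp
  show "fQ (S z) z \<le> 4 * fQ z z" using up e1 unfolding g_def by simp
qed

lemma fQ0: "0 \<le> fQ z z" by (rule fm_nonneg[OF Bt nu0 nu0])

lemma S_bound: assumes z: "z \<in> carrier_vec n" shows "fQ (S z) (S z) \<le> 4\<^sup>2 * fQ z z"
proof (rule polar[OF Bt nu0 nu0, of 4 S])
  fix x :: "real vec" assume x: "x \<in> carrier_vec n"
  show "\<bar>fQ (S x) x\<bar> \<le> 4 * fQ x x" using S_range[OF x] fQ0[of x] by simp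
qed (use z S_add S_minus S_sa in auto)

definition "Xo z = S z - (17/8) \<cdot>\<^sub>v z"

lemma Xo_bound: assumes z: "z \<in> carrier_vec n" shows "fQ (Xo z) (Xo z) \<le> (15/8)\<^sup>2 * fQ z z"
proof (rule polar[OF Bt nu0 nu0, of "15/8" Xo])
  fix x :: "real vec" assume x: "x \<in> carrier_vec n"
  have "fQ (Xo x) x = fQ (S x) x - (17/8) * fQ x x"
    unfolding Xo_def using x by (simp add: fm_minus_l[OF Bt nu0] fm_smult_l[OF Bt nu0])
  thus "\<bar>fQ (Xo x) x\<bar> \<le> 15/8 * fQ x x" using S_range[OF x] fQ0[of x] unfolding abs_le_iff by linarith
next
  fix x y :: "real vec" assume x: "x \<in> carrier_vec n" and y: "y \<in> carrier_vec n"
  show "Xo (x + y) = Xo x + Xo y" unfolding Xo_def using x y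
    by (intro vec_eqI_carrier[of _ n]) (auto simp: S_add algebra_simps)
  show "Xo (x - y) = Xo x - Xo y" unfolding Xo_def using x y
    by (intro vec_eqI_carrier[of _ n]) (auto simp: S_minus field_simps)
  show "fQ (Xo x) y = fQ x (Xo y)" unfolding Xo_def using x y
    by (simp add: fm_minus_l[OF Bt nu0] fm_smult_l[OF Bt nu0] fm_minus_r[OF Bt nu0] fm_smult_r[OF Bt nu0] S_sa)
qed (use z Xo_def in auto)

definition "ss = (544/353 :: real)"
definition "tt = (128/353 :: real)"

definition "Yo z = z - ss \<cdot>\<^sub>v S z + tt \<cdot>\<^sub>v S (S z)"

lemma Yo_carrier[simp]: "z \<in> carrier_vec n \<Longrightarrow> Yo z \<in> carrier_vec n" unfolding Yo_def by simp

lemma Yo_bound: assumes z: "z \<in> carrier_vec n" shows "fQ (Yo z) (Yo z) \<le> (225/353)\<^sup>2 * fQ z z"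
proof (rule polar[OF Bt nu0 nu0, of "225/353" Yo])
  fix x :: "real vec" assume x: "x \<in> carrier_vec n"
  have e1: "fQ (Yo x) x = fQ x x - ss * fQ (S x) x + tt * fQ (S x) (S x)"
    unfolding Yo_def using x
    by (simp add: fm_minus_l[OF Bt nu0] fm_smult_l[OF Bt nu0] fm_add_l[OF Bt nu0] S_sa)
  have e2: "fQ (Xo x) (Xo x) = fQ (S x) (S x) - 2 * (17/8) * fQ (S x) x + (17/8)\<^sup>2 * fQ x x"
    unfolding Xo_def using x
    by (simp add: fm_minus_l[OF Bt nu0] fm_smult_l[OF Bt nu0] fm_minus_r[OF Bt nu0] fm_smult_r[OF Bt nu0]
        fQsym[of x "S x"] power2_eq_square algebra_simps)
  have e3: "fQ (Yo x) x = - (225/353) * fQ x x + tt * fQ (Xo x) (Xo x)"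
    unfolding e1 e2 ss_def tt_def by (simp add: power2_eq_square algebra_simps)
  have b: "0 \<le> fQ (Xo x) (Xo x)" "fQ (Xo x) (Xo x) \<le> (225/64) * fQ x x"
    using fQ0 Xo_bound[OF x] by (auto simp: power2_eq_square)
  show "\<bar>fQ (Yo x) x\<bar> \<le> 225/353 * fQ x x"
    unfolding e3 tt_def abs_le_iff using b fQ0[of x] by linarith
next
  fix x y :: "real vec" assume x: "x \<in> carrier_vec n" and y: "y \<in> carrier_vec n"
  show "Yo (x + y) = Yo x + Yo y" unfolding Yo_def using x y
    by (intro vec_eqI_carrier[of _ n]) (auto simp: S_add algebra_simps)
  show "Yo (x - y) = Yo x - Yo y" unfolding Yo_def using x y
    by (intro vec_eqI_carrier[of _ n]) (auto simp: S_minus algebra_simps)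
  have "fQ (S (S x)) y = fQ x (S (S y))" using x y by (simp add: S_sa)
  thus "fQ (Yo x) y = fQ x (Yo y)" unfolding Yo_def using x y
    by (simp add: fm_minus_l[OF Bt nu0] fm_smult_l[OF Bt nu0] fm_add_l[OF Bt nu0]
        fm_minus_r[OF Bt nu0] fm_smult_r[OF Bt nu0] fm_add_r[OF Bt nu0] S_sa)
qed (use z in auto)

end

lemma fm_swap: assumes W: "W \<in> carrier_mat m k" and c: "0 \<le> c" and a: "a \<in> carrier_vec k" and b: "b \<in> carrier_vec k"
  shows "fm W c (a - b) (a - b) = fm W c (b - a) (b - a)"
  using a b by (simp add: fm_minus_l[OF W c] fm_minus_r[OF W c] fm_sym[OF W c, of a b])

lemma nf_swap: assumes W: "W \<in> carrier_mat m k" and c: "0 \<le> c" and a: "a \<in> carrier_vec k" and b: "b \<in> carrier_vec k"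
  shows "nf W c (a - b) = nf W c (b - a)"
  using nf_def[OF W c] fm_swap[OF assms] by simp

context setting begin

lemma dims[simp]: "dim_row A = n" "dim_col A = d" "dim_row B = n" "dim_col B = s"
  using A B by auto
lemma Mi_dims[simp]: "dim_row Mi = d" "dim_col Mi = d" using Ki[OF A nu] by auto
lemma Ni_dims[simp]: "dim_row Ni = s" "dim_col Ni = s" using Ki[OF B nu] by auto
lemma Pinv_dims[simp]: "dim_row Pinv = n" "dim_col Pinv = n" using Pinv by auto

lemma A_mv[simp]: "v \<in> carrier_vec d \<Longrightarrow> A *\<^sub>v v \<in> carrier_vec n" using A by simp
lemma At_mv[simp]: "v \<in> carrier_vec n \<Longrightarrow> At *\<^sub>v v \<in> carrier_vec d" using A by simp
lemma B_mv[simp]: "v \<in> carrier_vec s \<Longrightarrow> B *\<^sub>v v \<in> carrier_vec n" using B by simp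
lemma Bt_mv[simp]: "v \<in> carrier_vec n \<Longrightarrow> Bt *\<^sub>v v \<in> carrier_vec s" using B by simp

lemma Woodbury: assumes r: "r \<in> carrier_vec n"
  shows "Pinv *\<^sub>v r = (1/\<nu>) \<cdot>\<^sub>v (r - A *\<^sub>v (Mi *\<^sub>v (At *\<^sub>v r)))"
proof -
  define g where "g = Mi *\<^sub>v (At *\<^sub>v r)"
  have g: "g \<in> carrier_vec d" unfolding g_def using r by simp
  have Mg: "Mv g = At *\<^sub>v r" unfolding g_def using r by (simp add: Mv_Mi)
  have Mgi: "(At *\<^sub>v (A *\<^sub>v g)) $ i + \<nu> * g $ i = (At *\<^sub>v r) $ i" if "i < d" for i
    using arg_cong[OF Mg, of "\<lambda>v. v $ i"] that g unfolding Mv_def by simp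
  define y where "y = (1/\<nu>) \<cdot>\<^sub>v (r - A *\<^sub>v g)"
  have y: "y \<in> carrier_vec n" unfolding y_def using r g by simp
  have "At *\<^sub>v y = (1/\<nu>) \<cdot>\<^sub>v (At *\<^sub>v r - At *\<^sub>v (A *\<^sub>v g))"
    unfolding y_def using r g
    by (simp add: mult_mat_vec[OF At] mult_minus_distrib_mat_vec[OF At])
  also have "\<dots> = g" using g r nu Mgi
    by (intro vec_eqI_carrier[of _ d]) (auto simp: field_simps)
  finally have Aty: "At *\<^sub>v y = g" .
  have "Pv y = r" unfolding Pv_def Aty using r g nu
    by (intro vec_eqI_carrier[of _ n]) (auto simp: y_def field_simps)
  hence "Pinv *\<^sub>v r = y" using Pi_Pv[OF y] by simp
  thus ?thesis unfolding y_def g_def .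
qed

end

locale setting_f = setting +
  fixes f :: "real vec \<Rightarrow> real vec"
  assumes fsol: "eps_solver (transpose_mat A * A + \<nu> \<cdot>\<^sub>m 1\<^sub>m d) (1 / (160 * \<kappa>\<^sup>2)) f"
begin

definition "\<delta> = 1 / (160 * \<kappa>\<^sup>2)"

lemma kappa1: "1 \<le> \<kappa>" unfolding \<kappa>_def using alpha0 nu by simp
lemma delta0: "0 \<le> \<delta>" unfolding \<delta>_def by simp

lemma f_props: assumes u: "u \<in> carrier_vec d"
  shows "f u \<in> carrier_vec d" "fM (f u - Mi *\<^sub>v u) (f u - Mi *\<^sub>v u) \<le> \<delta> * (u \<bullet> (Mi *\<^sub>v u))"
proof -
  have Me: "transpose_mat A * A + \<nu> \<cdot>\<^sub>m 1\<^sub>m d = Mm" using KK_def[OF A nu] by simp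
  have Mc: "Mm \<in> carrier_mat d d" using KK[OF A nu] .
  have Mie: "mat_inv Mm = Mi" using Ki_def[OF A nu] by simp
  from fsol[unfolded eps_solver_def eps_solution_def Me Mie, rule_format, of u] u Mc
  have 1: "dim_vec (f u) = d" and 2: "qform Mm (f u - Mi *\<^sub>v u) \<le> \<delta> * qform Mi u"
    unfolding \<delta>_def by auto
  show fu: "f u \<in> carrier_vec d" using 1 by auto
  have "qform Mm (f u - Mi *\<^sub>v u) = fM (f u - Mi *\<^sub>v u) (f u - Mi *\<^sub>v u)"
    unfolding qform_def using fu u by (intro KK_form[OF A nu]) auto
  thus "fM (f u - Mi *\<^sub>v u) (f u - Mi *\<^sub>v u) \<le> \<delta> * (u \<bullet> (Mi *\<^sub>v u))"
    using 2 unfolding qform_def by simp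
qed

lemma f_dim[simp]: "u \<in> carrier_vec d \<Longrightarrow> dim_vec (f u) = d"
  using f_props(1) by auto

definition "hprog u = (let x1 = f u; a1 = A *\<^sub>v x1; a2 = At *\<^sub>v a1; a3 = 1 \<cdot>\<^sub>v u + (-1) \<cdot>\<^sub>v a2;
    a4 = 1 \<cdot>\<^sub>v a3 + (-\<nu>) \<cdot>\<^sub>v x1; x2 = f a4 in 1 \<cdot>\<^sub>v x1 + 1 \<cdot>\<^sub>v x2)"

definition "Gt r = (1/\<nu>) \<cdot>\<^sub>v r + (-1/\<nu>) \<cdot>\<^sub>v (A *\<^sub>v hprog (At *\<^sub>v r))"

lemma Mi_form: "u \<in> carrier_vec d \<Longrightarrow> u \<bullet> (Mi *\<^sub>v u) = fM (Mi *\<^sub>v u) (Mi *\<^sub>v u)"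
  by (rule Ki_form[OF A nu])

lemma refine: assumes u: "u \<in> carrier_vec d"
  shows "hprog u \<in> carrier_vec d"
    "fM (hprog u - Mi *\<^sub>v u) (hprog u - Mi *\<^sub>v u) \<le> \<delta> * \<delta> * (u \<bullet> (Mi *\<^sub>v u))"
proof -
  define x1 where "x1 = f u"
  have x1: "x1 \<in> carrier_vec d" unfolding x1_def using f_props(1)[OF u] .
  define a4 where "a4 = 1 \<cdot>\<^sub>v (1 \<cdot>\<^sub>v u + (-1) \<cdot>\<^sub>v (At *\<^sub>v (A *\<^sub>v x1))) + (-\<nu>) \<cdot>\<^sub>v x1"
  have a4: "a4 \<in> carrier_vec d" unfolding a4_def using u x1 by simp
  have a4e: "a4 = u - Mv x1" unfolding a4_def Mv_def using u x1
    by (intro vec_eqI_carrier[of _ d]) auto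
  define x2 where "x2 = f a4"
  have x2: "x2 \<in> carrier_vec d" unfolding x2_def using f_props(1)[OF a4] .
  have he: "hprog u = x1 + x2" unfolding hprog_def x1_def[symmetric] Let_def a4_def[symmetric] x2_def[symmetric]
    by simp
  show hc: "hprog u \<in> carrier_vec d" unfolding he using x1 x2 by simp
  have Mia4: "Mi *\<^sub>v a4 = Mi *\<^sub>v u - x1"
    unfolding a4e using u x1 by (simp add: mult_minus_distrib_mat_vec[OF Ki[OF A nu]] Mi_Mv)
  have ee: "hprog u - Mi *\<^sub>v u = f a4 - Mi *\<^sub>v a4"
    unfolding he Mia4 x2_def[symmetric] using x1 x2 u
    by (intro vec_eqI_carrier[of _ d]) auto
  have "fM (hprog u - Mi *\<^sub>v u) (hprog u - Mi *\<^sub>v u) \<le> \<delta> * (a4 \<bullet> (Mi *\<^sub>v a4))"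
    unfolding ee by (rule f_props(2)[OF a4])
  also have "a4 \<bullet> (Mi *\<^sub>v a4) = fM (Mi *\<^sub>v a4) (Mi *\<^sub>v a4)" by (rule Mi_form[OF a4])
  also have "\<dots> = fM (x1 - Mi *\<^sub>v u) (x1 - Mi *\<^sub>v u)"
    unfolding Mia4 using x1 u by (intro fm_swap[OF A nu0]) auto
  also have "\<dots> \<le> \<delta> * (u \<bullet> (Mi *\<^sub>v u))" unfolding x1_def by (rule f_props(2)[OF u])
  finally show "fM (hprog u - Mi *\<^sub>v u) (hprog u - Mi *\<^sub>v u) \<le> \<delta> * \<delta> * (u \<bullet> (Mi *\<^sub>v u))"
    using delta0 by (simp add: mult_left_mono mult.assoc)
qed

lemma Gt_carrier[simp]: "r \<in> carrier_vec n \<Longrightarrow> Gt r \<in> carrier_vec n"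
  unfolding Gt_def using refine(1)[of "At *\<^sub>v r"] by simp

lemma uMiu_le: assumes r: "r \<in> carrier_vec n"
  shows "(At *\<^sub>v r) \<bullet> (Mi *\<^sub>v (At *\<^sub>v r)) \<le> r \<bullet> r"
proof -
  define u where "u = At *\<^sub>v r"
  define g where "g = Mi *\<^sub>v u"
  have u: "u \<in> carrier_vec d" unfolding u_def using r by simp
  have g: "g \<in> carrier_vec d" unfolding g_def using u by simp
  define X where "X = u \<bullet> g"
  have X: "X = fM g g" unfolding X_def g_def by (rule Mi_form[OF u])
  have X0: "0 \<le> X" unfolding X by (rule fm_nonneg[OF A nu0 nu0])
  have "X = r \<bullet> (A *\<^sub>v g)" unfolding X_def u_def using r g by (intro transpose_vec_mult_scalar[OF A]) auto
  hence "X\<^sup>2 \<le> (r \<bullet> r) * ((A *\<^sub>v g) \<bullet> (A *\<^sub>v g))" using dot_cs[OF r, of "A *\<^sub>v g"] g by simp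
  also have "\<dots> \<le> (r \<bullet> r) * X" unfolding X
    using fm_ge_W[OF A nu0 nu0, of g] dot_self_nonneg[of r] by (rule mult_left_mono)
  finally have "X * X \<le> (r \<bullet> r) * X" by (simp add: power2_eq_square)
  hence "X \<le> r \<bullet> r" using X0 dot_self_nonneg[of r] by (cases "X = 0") auto
  thus ?thesis unfolding X_def u_def g_def .
qed

lemma Qv_sq: assumes w: "w \<in> carrier_vec n"
  shows "Qv w \<bullet> Qv w \<le> (\<beta> + \<nu>) * fQ w w"
proof -
  define p where "p = Bt *\<^sub>v w"
  have p: "p \<in> carrier_vec s" unfolding p_def using w by simp
  have Bp: "B *\<^sub>v p \<in> carrier_vec n" using p by simp
  have cross: "(B *\<^sub>v p) \<bullet> w = p \<bullet> p"
    using transpose_vec_mult_scalar[OF Bt w p] unfolding p_def by simp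
  have cross2: "w \<bullet> (B *\<^sub>v p) = p \<bullet> p" using cross comm_scalar_prod[OF w Bp] by simp
  have "Qv w \<bullet> Qv w = (B *\<^sub>v p) \<bullet> (B *\<^sub>v p) + 2 * \<nu> * (p \<bullet> p) + \<nu> * \<nu> * (w \<bullet> w)"
    unfolding Qv_def p_def[symmetric] using Bp w cross cross2
    by (simp add: add_scalar_prod_distrib[of _ n] scalar_prod_add_distrib[of _ n] algebra_simps)
  moreover have "fQ w w = p \<bullet> p + \<nu> * (w \<bullet> w)" unfolding fm_def p_def ..
  moreover have h1: "(B *\<^sub>v p) \<bullet> (B *\<^sub>v p) \<le> \<beta> * (p \<bullet> p)" by (rule B_bound[OF p])
  moreover have h2: "\<nu> * (p \<bullet> p) \<le> \<nu> * (\<beta> * (w \<bullet> w))"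
    using Bt_bound[OF w] nu0 unfolding p_def by (rule mult_left_mono)
  ultimately show ?thesis by (simp add: algebra_simps)
qed

lemma num_bound: "4 * (1/\<nu>)\<^sup>2 * \<alpha> * (\<delta> * \<delta>) * (\<beta> + \<nu>) \<le> 1/1600"
proof -
  define a where "a = \<alpha> / \<nu>"
  have a0: "0 \<le> a" unfolding a_def using alpha0 nu by simp
  have K: "\<kappa> = 1 + a" unfolding a_def \<kappa>_def ..
  have e: "4 * (1/\<nu>)\<^sup>2 * \<alpha> * (\<delta> * \<delta>) * (\<beta> + \<nu>) = 16 * a * (1 + a) * (\<delta> * \<delta>)"
    unfolding a_def \<beta>_def using nu by (simp add: field_simps power2_eq_square)
  have d: "\<delta> * \<delta> = 1 / (25600 * (1 + a)^4)" unfolding \<delta>_def K by (simp add: field_simps power2_eq_square power4_eq_xxxx)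
  have p: "0 < (1 + a)^4" using a0 by simp
  have "a * (1 + a) \<le> (1 + a) ^ 4"
  proof -
    have "a * (1 + a) \<le> (1 + a) * (1 + a)" using a0 by (simp add: mult_right_mono)
    also have "\<dots> \<le> (1 + a) * (1 + a) * ((1 + a) * (1 + a))"
    proof -
      have aa: "0 \<le> a * a" using a0 by simp
      have "(1 + a) * (1 + a) = 1 + (2 * a + a * a)" by (simp add: algebra_simps)
      hence y1: "1 \<le> (1 + a) * (1 + a)" using a0 aa by linarith
      have x0: "0 \<le> (1 + a) * (1 + a)" by simp
      show ?thesis using mult_left_mono[OF y1 x0] by simp
    qed
    finally show ?thesis by (simp add: power4_eq_xxxx mult.assoc)
  qed
  hence "16 * a * (1 + a) * (1 / (25600 * (1 + a)^4)) \<le> 1/1600"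
    using p by (simp add: field_simps)
  thus ?thesis by (subst e, subst d, assumption)
qed

lemma Err: assumes w: "w \<in> carrier_vec n"
  shows "fQ (Gt (Qv w) - S w) (Gt (Qv w) - S w) \<le> (1/40)\<^sup>2 * fQ w w"
proof -
  define r where "r = Qv w"
  have r: "r \<in> carrier_vec n" unfolding r_def using w by simp
  define u where "u = At *\<^sub>v r"
  have u: "u \<in> carrier_vec d" unfolding u_def using r by simp
  define g where "g = Mi *\<^sub>v u"
  have g: "g \<in> carrier_vec d" unfolding g_def using u by simp
  define hh where "hh = hprog u"
  have hh: "hh \<in> carrier_vec d" unfolding hh_def using refine(1)[OF u] .
  define e where "e = hh - g"
  have e: "e \<in> carrier_vec d" unfolding e_def using hh g by simp
  have Sw: "S w = (1/\<nu>) \<cdot>\<^sub>v (r - A *\<^sub>v g)" unfolding S_def r_def[symmetric] g_def u_def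
    by (rule Woodbury[OF r])
  have Ae: "A *\<^sub>v e = A *\<^sub>v hh - A *\<^sub>v g" unfolding e_def using hh g by (simp add: mult_minus_distrib_mat_vec[OF A])
  have Ee: "Gt (Qv w) - S w = (-1/\<nu>) \<cdot>\<^sub>v (A *\<^sub>v e)"
    unfolding Sw Gt_def r_def[symmetric] u_def[symmetric] hh_def[symmetric] Ae using r hh g nu
    by (intro vec_eqI_carrier[of _ n]) (auto simp: field_simps)
  have Aec: "A *\<^sub>v e \<in> carrier_vec n" using e by simp
  have "fQ (Gt (Qv w) - S w) (Gt (Qv w) - S w) \<le> 4 * fP ((-1/\<nu>) \<cdot>\<^sub>v (A *\<^sub>v e)) ((-1/\<nu>) \<cdot>\<^sub>v (A *\<^sub>v e))"
    unfolding Ee using hyp(1) Aec by simp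
  also have "fP ((-1/\<nu>) \<cdot>\<^sub>v (A *\<^sub>v e)) ((-1/\<nu>) \<cdot>\<^sub>v (A *\<^sub>v e)) = (1/\<nu>)\<^sup>2 * fP (A *\<^sub>v e) (A *\<^sub>v e)"
    using Aec by (simp add: fm_smult_l[OF At nu0] fm_smult_r[OF At nu0] power2_eq_square)
  also have "fP (A *\<^sub>v e) (A *\<^sub>v e) \<le> \<alpha> * fM e e"
  proof -
    have "fP (A *\<^sub>v e) (A *\<^sub>v e) = (At *\<^sub>v (A *\<^sub>v e)) \<bullet> (At *\<^sub>v (A *\<^sub>v e)) + \<nu> * ((A *\<^sub>v e) \<bullet> (A *\<^sub>v e))"
      unfolding fm_def ..
    also have "\<dots> \<le> \<alpha> * ((A *\<^sub>v e) \<bullet> (A *\<^sub>v e)) + \<nu> * (\<alpha> * (e \<bullet> e))"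
      using At_bound[OF Aec] A_bound[OF e] nu0 by (intro add_mono mult_left_mono) auto
    also have "\<dots> = \<alpha> * fM e e" unfolding fm_def by (simp add: algebra_simps)
    finally show ?thesis .
  qed
  also have "fM e e \<le> \<delta> * \<delta> * (u \<bullet> g)"
    unfolding e_def hh_def g_def by (rule refine(2)[OF u])
  also have "u \<bullet> g \<le> r \<bullet> r" unfolding u_def g_def by (rule uMiu_le[OF r])
  also have "r \<bullet> r \<le> (\<beta> + \<nu>) * fQ w w" unfolding r_def by (rule Qv_sq[OF w])
  finally have "fQ (Gt (Qv w) - S w) (Gt (Qv w) - S w) \<le> (4 * (1/\<nu>)\<^sup>2 * \<alpha> * (\<delta> * \<delta>) * (\<beta> + \<nu>)) * fQ w w"
    using alpha0 delta0 beta0 nu0 by (simp add: mult_left_mono mult_right_mono mult.assoc)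
  also have "\<dots> \<le> (1/1600) * fQ w w" using num_bound fQ0 by (rule mult_right_mono)
  finally show ?thesis by (simp add: power2_eq_square)
qed

end

context setting_f begin

definition "xs b = Ni *\<^sub>v b"
definition "ys b = B *\<^sub>v xs b"

definition "stepf b y = (let r1 = 1 \<cdot>\<^sub>v (B *\<^sub>v b) + (-1) \<cdot>\<^sub>v Qv y; g1 = Gt r1; g2 = Gt (Qv g1);
   y1 = 1 \<cdot>\<^sub>v y + ss \<cdot>\<^sub>v g1 in 1 \<cdot>\<^sub>v y1 + (-tt) \<cdot>\<^sub>v g2)"

lemma xs_carrier[simp]: "b \<in> carrier_vec s \<Longrightarrow> xs b \<in> carrier_vec s" unfolding xs_def by simp
lemma ys_carrier[simp]: "b \<in> carrier_vec s \<Longrightarrow> ys b \<in> carrier_vec n" unfolding ys_def by simp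

lemma xs_dim[simp]: "b \<in> carrier_vec s \<Longrightarrow> dim_vec (xs b) = s" using xs_carrier[of b] by (simp del: xs_carrier)
lemma ys_dim[simp]: "b \<in> carrier_vec s \<Longrightarrow> dim_vec (ys b) = n" using ys_carrier[of b] by (simp del: ys_carrier)
lemma Qv_dim[simp]: "y \<in> carrier_vec n \<Longrightarrow> dim_vec (Qv y) = n" using Qv_carrier[of y] by (simp del: Qv_carrier)
lemma Gt_dim[simp]: "y \<in> carrier_vec n \<Longrightarrow> dim_vec (Gt y) = n" using Gt_carrier[of y] by (simp del: Gt_carrier)

lemma stepf_carrier[simp]: "b \<in> carrier_vec s \<Longrightarrow> y \<in> carrier_vec n \<Longrightarrow> stepf b y \<in> carrier_vec n"
  unfolding stepf_def Let_def by simp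

lemma Nv_xs: "b \<in> carrier_vec s \<Longrightarrow> Nv (xs b) = b" unfolding xs_def by (rule Nv_Ni)

lemma Qv_ys: assumes b: "b \<in> carrier_vec s" shows "Qv (ys b) = B *\<^sub>v b"
proof -
  have x: "xs b \<in> carrier_vec s" using b by simp
  have "B *\<^sub>v b = B *\<^sub>v (Nv (xs b))" using Nv_xs[OF b] by simp
  also have "\<dots> = B *\<^sub>v (Bt *\<^sub>v (B *\<^sub>v xs b)) + \<nu> \<cdot>\<^sub>v (B *\<^sub>v xs b)"
    unfolding Nv_def using x by (simp add: mult_add_distrib_mat_vec[OF B] mult_mat_vec[OF B])
  finally show ?thesis unfolding Qv_def ys_def by simp
qed

lemmas nQ_le_iff = nf_le_iff[OF Bt nu0 nu0]
lemmas nQ_smult = nf_smult[OF Bt nu0 nu0]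
lemmas nQ_add = nf_add[OF Bt nu0 nu0]
lemmas nQ_minus = nf_minus[OF Bt nu0 nu0]
lemmas nQ_nonneg = nf_nonneg[OF Bt nu0]

lemma step_contract: assumes b: "b \<in> carrier_vec s" and y: "y \<in> carrier_vec n"
  shows "nQ (stepf b y - ys b) \<le> (3/4) * nQ (y - ys b)"
proof -
  define w1 where "w1 = ys b - y"
  have w1: "w1 \<in> carrier_vec n" unfolding w1_def using b y by simp
  have r1e: "1 \<cdot>\<^sub>v (B *\<^sub>v b) + (-1) \<cdot>\<^sub>v Qv y = Qv w1"
    unfolding w1_def using b y Qv_ys[OF b]
    by (simp add: Qv_minus) (intro vec_eqI_carrier[of _ n], auto)
  define g1 where "g1 = Gt (Qv w1)"
  have g1: "g1 \<in> carrier_vec n" unfolding g1_def using w1 by simp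
  define E1 where "E1 = g1 - S w1"
  have E1: "E1 \<in> carrier_vec n" unfolding E1_def using g1 w1 by simp
  have g1e: "g1 = S w1 + E1" unfolding E1_def using g1 w1
    by (intro vec_eqI_carrier[of _ n]) auto
  define g2 where "g2 = Gt (Qv g1)"
  have g2: "g2 \<in> carrier_vec n" unfolding g2_def using g1 by simp
  define E2 where "E2 = g2 - S g1"
  have E2: "E2 \<in> carrier_vec n" unfolding E2_def using g2 g1 by simp
  have Sg1: "S g1 = S (S w1) + S E1" unfolding g1e using w1 E1 by (simp add: S_add)
  have SE1: "S E1 \<in> carrier_vec n" using E1 by simp
  have Yw: "Yo w1 \<in> carrier_vec n" using w1 by simp
  have ident: "stepf b y - ys b = (-1) \<cdot>\<^sub>v Yo w1 + ss \<cdot>\<^sub>v E1 - tt \<cdot>\<^sub>v S E1 - tt \<cdot>\<^sub>v E2"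
  proof -
    have st: "stepf b y = 1 \<cdot>\<^sub>v (1 \<cdot>\<^sub>v y + ss \<cdot>\<^sub>v g1) + (-tt) \<cdot>\<^sub>v g2"
      unfolding stepf_def Let_def r1e g1_def g2_def ..
    have e2: "g2 = S (S w1) + S E1 + E2" unfolding E2_def Sg1[symmetric] using g2 g1
      by (intro vec_eqI_carrier[of _ n]) auto
    show ?thesis unfolding st e2 unfolding g1e Yo_def w1_def
      using b y w1 E1 E2 SE1 by (intro vec_eqI_carrier[of _ n]) (auto simp: w1_def algebra_simps)
  qed
  define N where "N = nQ w1"
  have N0: "0 \<le> N" unfolding N_def by (rule nQ_nonneg)
  have c40: "0 \<le> (1/40::real)" by simp
  have nE1: "nQ E1 \<le> (1/40) * N" unfolding N_def E1_def g1_def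
    using Err[OF w1] nQ_le_iff[OF c40] by blast
  have c4: "0 \<le> (4::real)" by simp
  have nSE1: "nQ (S E1) \<le> 4 * nQ E1"
    using S_bound[OF E1] nQ_le_iff[OF c4] by blast
  have nSw1: "nQ (S w1) \<le> 4 * N" unfolding N_def
    using S_bound[OF w1] nQ_le_iff[OF c4] by blast
  have ng1: "nQ g1 \<le> 4 * N + nQ E1" unfolding g1e using nQ_add[of "S w1" E1] w1 E1 nSw1 by simp
  have nE2: "nQ E2 \<le> (1/40) * nQ g1" unfolding E2_def g2_def
    using Err[OF g1] nQ_le_iff[OF c40] by blast
  have nY: "nQ (Yo w1) \<le> (225/353) * N" unfolding N_def
    using Yo_bound[OF w1] nQ_le_iff[of "225/353"] by simp
  have "nQ (stepf b y - ys b) \<le> nQ ((-1) \<cdot>\<^sub>v Yo w1 + ss \<cdot>\<^sub>v E1 - tt \<cdot>\<^sub>v S E1) + nQ (tt \<cdot>\<^sub>v E2)"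
    unfolding ident using Yw E1 SE1 E2 by (intro nQ_minus) auto
  also have "nQ ((-1) \<cdot>\<^sub>v Yo w1 + ss \<cdot>\<^sub>v E1 - tt \<cdot>\<^sub>v S E1) \<le> nQ ((-1) \<cdot>\<^sub>v Yo w1 + ss \<cdot>\<^sub>v E1) + nQ (tt \<cdot>\<^sub>v S E1)"
    using Yw E1 SE1 by (intro nQ_minus) auto
  also have "nQ ((-1) \<cdot>\<^sub>v Yo w1 + ss \<cdot>\<^sub>v E1) \<le> nQ ((-1) \<cdot>\<^sub>v Yo w1) + nQ (ss \<cdot>\<^sub>v E1)"
    using Yw E1 by (intro nQ_add) auto
  finally have tri: "nQ (stepf b y - ys b) \<le> nQ (Yo w1) + ss * nQ E1 + tt * nQ (S E1) + tt * nQ E2"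
    using Yw E1 SE1 E2 by (simp add: nQ_smult ss_def tt_def)
  have "nQ (stepf b y - ys b) \<le> (3/4) * N"
    using tri nY nE1 nSE1 ng1 nE2 N0 unfolding ss_def tt_def by linarith
  moreover have "N = nQ (y - ys b)" unfolding N_def w1_def using b y by (intro nf_swap[OF Bt nu0]) auto
  ultimately show ?thesis by simp
qed

definition "yk b k = (stepf b ^^ k) (0\<^sub>v n)"

lemma yk_carrier[simp]: "b \<in> carrier_vec s \<Longrightarrow> yk b k \<in> carrier_vec n"
  unfolding yk_def by (induct k) auto

lemma yk_Suc: "yk b (Suc k) = stepf b (yk b k)" unfolding yk_def by simp

lemma yk_contract: assumes b: "b \<in> carrier_vec s"
  shows "nQ (yk b k - ys b) \<le> (3/4)^k * nQ (0\<^sub>v n - ys b)"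
proof (induct k)
  case 0 thus ?case unfolding yk_def by simp
next
  case (Suc k)
  have "nQ (yk b (Suc k) - ys b) \<le> (3/4) * nQ (yk b k - ys b)"
    unfolding yk_Suc using b by (intro step_contract) auto
  also have "\<dots> \<le> (3/4) * ((3/4)^k * nQ (0\<^sub>v n - ys b))" using Suc by simp
  finally show ?case by simp
qed

definition "xout b y = (1/\<nu>) \<cdot>\<^sub>v b + (-1/\<nu>) \<cdot>\<^sub>v (Bt *\<^sub>v y)"

lemma xout_carrier[simp]: "b \<in> carrier_vec s \<Longrightarrow> y \<in> carrier_vec n \<Longrightarrow> xout b y \<in> carrier_vec s"
  unfolding xout_def by simp

lemma final_err: assumes b: "b \<in> carrier_vec s" and y: "y \<in> carrier_vec n"
  shows "fN (xout b y - xs b) (xout b y - xs b) \<le> (\<beta> + \<nu>) / \<nu>\<^sup>2 * fQ (y - ys b) (y - ys b)"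
proof -
  define z where "z = y - ys b"
  have z: "z \<in> carrier_vec n" unfolding z_def using b y by simp
  define v where "v = Bt *\<^sub>v z"
  have v: "v \<in> carrier_vec s" unfolding v_def using z by simp
  have x: "xs b \<in> carrier_vec s" using b by simp
  have Nx: "Bt *\<^sub>v (B *\<^sub>v xs b) + \<nu> \<cdot>\<^sub>v xs b = b" using Nv_xs[OF b] unfolding Nv_def .
  define cc where "cc = Bt *\<^sub>v (B *\<^sub>v xs b)"
  have cc: "cc \<in> carrier_vec s" unfolding cc_def using x by simp
  have Nxi: "cc $ i + \<nu> * xs b $ i = b $ i" if "i < s" for i
    using arg_cong[OF Nx, of "\<lambda>v. v $ i"] that x cc unfolding cc_def by simp
  have xse: "xs b = (1/\<nu>) \<cdot>\<^sub>v (b - cc)"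
  proof (rule vec_eqI_carrier[of _ s])
    fix i assume i: "i < s"
    have "\<nu> * xs b $ i = b $ i - cc $ i" using Nxi[OF i] by simp
    hence "xs b $ i = (b $ i - cc $ i) / \<nu>" using nu by (simp add: field_simps)
    thus "xs b $ i = ((1/\<nu>) \<cdot>\<^sub>v (b - cc)) $ i" using i b cc by simp
  qed (use x b cc in auto)
  have vz: "v = Bt *\<^sub>v y - cc" unfolding v_def z_def ys_def cc_def using y x
    by (simp add: mult_minus_distrib_mat_vec[OF Bt])
  have ee: "xout b y - xs b = (-1/\<nu>) \<cdot>\<^sub>v v"
    unfolding xout_def vz xse using b y cc nu
    by (intro vec_eqI_carrier[of _ s]) (auto simp: field_simps)
  have "fN (xout b y - xs b) (xout b y - xs b) = (1/\<nu>)\<^sup>2 * fN v v"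
    unfolding ee using v by (simp add: fm_smult_l[OF B nu0] fm_smult_r[OF B nu0] power2_eq_square)
  also have "fN v v \<le> (\<beta> + \<nu>) * fQ z z"
  proof -
    have "fN v v = (B *\<^sub>v v) \<bullet> (B *\<^sub>v v) + \<nu> * (v \<bullet> v)" unfolding fm_def ..
    also have "\<dots> \<le> (\<beta> + \<nu>) * (v \<bullet> v)" using B_bound[OF v] by (simp add: algebra_simps)
    also have "v \<bullet> v \<le> fQ z z" unfolding v_def by (rule fm_ge_W[OF Bt nu0 nu0])
    hence "(\<beta> + \<nu>) * (v \<bullet> v) \<le> (\<beta> + \<nu>) * fQ z z" using beta0 nu0 by (intro mult_left_mono) auto
    finally show ?thesis .
  qed
  finally show ?thesis unfolding z_def using nu by (simp add: mult_left_mono power2_eq_square divide_simps)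
qed

lemma init_bound: assumes b: "b \<in> carrier_vec s"
  shows "fQ (0\<^sub>v n - ys b) (0\<^sub>v n - ys b) \<le> (\<beta> + \<nu>) * (b \<bullet> (Ni *\<^sub>v b))"
proof -
  have x: "xs b \<in> carrier_vec s" using b by simp
  define p where "p = B *\<^sub>v xs b"
  have p: "p \<in> carrier_vec n" unfolding p_def using x by simp
  have "fQ (0\<^sub>v n - ys b) (0\<^sub>v n - ys b) = fQ (ys b - 0\<^sub>v n) (ys b - 0\<^sub>v n)" using b by (intro fm_swap[OF Bt nu0]) auto
  also have "\<dots> = fQ p p" unfolding ys_def p_def[symmetric] using p by simp
  also have "\<dots> = (Bt *\<^sub>v p) \<bullet> (Bt *\<^sub>v p) + \<nu> * (p \<bullet> p)" unfolding fm_def ..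
  also have "\<dots> \<le> (\<beta> + \<nu>) * (p \<bullet> p)" using Bt_bound[OF p] by (simp add: algebra_simps)
  also have "p \<bullet> p \<le> fN (xs b) (xs b)" unfolding p_def by (rule fm_ge_W[OF B nu0 nu0])
  hence "(\<beta> + \<nu>) * (p \<bullet> p) \<le> (\<beta> + \<nu>) * fN (xs b) (xs b)" using beta0 nu0 by (intro mult_left_mono) auto
  also have "fN (xs b) (xs b) = b \<bullet> (Ni *\<^sub>v b)" unfolding xs_def by (rule Ki_form[OF B nu b, symmetric])
  finally show ?thesis .
qed

lemma total_err: assumes b: "b \<in> carrier_vec s"
  shows "fN (xout b (yk b k) - xs b) (xout b (yk b k) - xs b) \<le> ((\<beta> + \<nu>) / \<nu>)\<^sup>2 * (9/16)^k * (b \<bullet> (Ni *\<^sub>v b))"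
proof -
  have c: "(\<beta> + \<nu>) / \<nu>\<^sup>2 \<ge> 0" using beta0 nu by simp
  have r0: "0 \<le> (3/4::real)^k" by simp
  have "fQ (yk b k - ys b) (yk b k - ys b) \<le> ((3/4)^k)\<^sup>2 * fQ (0\<^sub>v n - ys b) (0\<^sub>v n - ys b)"
    using yk_contract[OF b, of k] nQ_le_iff[OF r0] by simp
  also have "\<dots> \<le> ((3/4)^k)\<^sup>2 * ((\<beta> + \<nu>) * (b \<bullet> (Ni *\<^sub>v b)))"
    using init_bound[OF b] by (intro mult_left_mono) auto
  finally have q: "fQ (yk b k - ys b) (yk b k - ys b) \<le> ((3/4)^k)\<^sup>2 * ((\<beta> + \<nu>) * (b \<bullet> (Ni *\<^sub>v b)))" .
  have "fN (xout b (yk b k) - xs b) (xout b (yk b k) - xs b) \<le> (\<beta> + \<nu>) / \<nu>\<^sup>2 * fQ (yk b k - ys b) (yk b k - ys b)"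
    using b by (intro final_err) auto
  also have "\<dots> \<le> (\<beta> + \<nu>) / \<nu>\<^sup>2 * (((3/4)^k)\<^sup>2 * ((\<beta> + \<nu>) * (b \<bullet> (Ni *\<^sub>v b))))"
    using q c by (rule mult_left_mono)
  also have "\<dots> = ((\<beta> + \<nu>) / \<nu>)\<^sup>2 * (9/16)^k * (b \<bullet> (Ni *\<^sub>v b))"
    by (simp add: power2_eq_square power_mult_distrib[symmetric] field_simps power_mult[symmetric])
  finally show ?thesis .
qed

end

lemma exec_append: "exec A B f (p @ q) r = exec A B f q (exec A B f p r)"
  by (induct p arbitrary: r) auto

lemma exec_cost_append: "exec_cost A B f cA cB (p @ q) r =
   exec_cost A B f cA cB p r + exec_cost A B f cA cB q (exec A B f p r)"
  by (induct p arbitrary: r) auto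

lemma exec_length: "length (exec A B f p r) = length r + length p"
  by (induct p arbitrary: r) auto

lemma num_calls_append: "num_calls (p @ q) = num_calls p + num_calls q"
  unfolding num_calls_def by simp

lemma step_lin: "dim_vec (get_reg r i) = dim_vec (get_reg r j) \<Longrightarrow>
   step A B f r (LinComb a i c j) = a \<cdot>\<^sub>v get_reg r i + c \<cdot>\<^sub>v get_reg r j" by simp
lemma step_mulA: "dim_vec (get_reg r i) = dim_col A \<Longrightarrow> step A B f r (MulA i) = A *\<^sub>v get_reg r i"
  by (simp add: mat_app_def)
lemma step_mulAt: "dim_vec (get_reg r i) = dim_row A \<Longrightarrow> step A B f r (MulAt i) = transpose_mat A *\<^sub>v get_reg r i"
  by (simp add: mat_app_def)
lemma step_mulB: "dim_vec (get_reg r i) = dim_col B \<Longrightarrow> step A B f r (MulB i) = B *\<^sub>v get_reg r i"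
  by (simp add: mat_app_def)
lemma step_mulBt: "dim_vec (get_reg r i) = dim_row B \<Longrightarrow> step A B f r (MulBt i) = transpose_mat B *\<^sub>v get_reg r i"
  by (simp add: mat_app_def)
lemma step_call: "step A B f r (CallF i) = f (get_reg r i)" by simp

lemma get_reg_app: "length r = L \<Longrightarrow> get_reg (r @ ws) (L + k) = (if k < length ws then ws ! k else 0\<^sub>v 0)"
  unfolding get_reg_def by (simp add: nth_append)
lemma get_reg_app0: "length r = L \<Longrightarrow> get_reg (r @ ws) L = (if 0 < length ws then ws ! 0 else 0\<^sub>v 0)"
  using get_reg_app[of r L ws 0] by simp
lemma get_reg_app1: "length r = L \<Longrightarrow> get_reg (r @ ws) (Suc L) = (if 1 < length ws then ws ! 1 else 0\<^sub>v 0)"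
  using get_reg_app[of r L ws 1] by simp
lemma get_reg_new: "length r = L \<Longrightarrow> L \<le> j \<Longrightarrow> get_reg (r @ ws) j = (if j - L < length ws then ws ! (j - L) else 0\<^sub>v 0)"
  unfolding get_reg_def by (auto simp: nth_append)
lemma get_reg_old: "i < length r \<Longrightarrow> get_reg (r @ ws) i = r ! i"
  unfolding get_reg_def by (simp add: nth_append)

definition "q_blk (\<nu>::real) (j::nat) L = [MulBt j, MulB L, LinComb 1 (L+1) \<nu> j]"
definition "gt_blk (\<nu>::real) (i::nat) L = [MulAt i, CallF L, MulA (L+1), MulAt (L+2), LinComb 1 L (-1) (L+3),
   LinComb 1 (L+4) (-\<nu>) (L+1), CallF (L+5), LinComb 1 (L+1) 1 (L+6), MulA (L+7), LinComb (1/\<nu>) i (-1/\<nu>) (L+8)]"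
definition "step_blk \<nu> L = q_blk \<nu> (L-1) L @ [LinComb 1 1 (-1) (L+2)] @ gt_blk \<nu> (L+3) (L+4) @
   q_blk \<nu> (L+13) (L+14) @ gt_blk \<nu> (L+16) (L+17) @
   [LinComb 1 (L-1) (544/353) (L+13), LinComb 1 (L+27) (-(128/353)) (L+26)]"


fun steps :: "real \<Rightarrow> nat \<Rightarrow> instr list" where
  "steps \<nu> 0 = []"
| "steps \<nu> (Suc k) = steps \<nu> k @ step_blk \<nu> (3 + 29 * k)"

definition "prog \<nu> T = [MulB 0, LinComb 0 1 0 1] @ steps \<nu> T @ [MulBt (2 + 29 * T), LinComb (1/\<nu>) 0 (-1/\<nu>) (3 + 29 * T)]"

lemma length_steps: "length (steps \<nu> k) = 29 * k"
  by (induct k) (auto simp: step_blk_def q_blk_def gt_blk_def)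

lemma calls_steps: "num_calls (steps \<nu> k) = 4 * k"
  by (induct k) (auto simp: num_calls_append step_blk_def q_blk_def gt_blk_def num_calls_def)

lemma calls_prog: "num_calls (prog \<nu> T) = 4 * T"
proof -
  have "num_calls [MulB 0, LinComb 0 1 0 1] = 0" "num_calls [MulBt (2 + 29 * T), LinComb (1/\<nu>) 0 (-1/\<nu>) (3 + 29 * T)] = 0"
    by (simp_all add: num_calls_def)
  thus ?thesis unfolding prog_def num_calls_append calls_steps by simp
qed

context setting_f begin

definition "q_regs w = [Bt *\<^sub>v w, B *\<^sub>v (Bt *\<^sub>v w), 1 \<cdot>\<^sub>v (B *\<^sub>v (Bt *\<^sub>v w)) + \<nu> \<cdot>\<^sub>v w]"

lemma q_regs_len[simp]: "length (q_regs w) = 3" unfolding q_regs_def by simp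
lemma q_regs_2[simp]: "q_regs w ! 2 = Qv w" unfolding q_regs_def Qv_def by simp

lemma q_exec: "length r = L \<Longrightarrow> j < L \<Longrightarrow> r ! j \<in> carrier_vec n \<Longrightarrow>
   exec A B f (q_blk \<nu> j L) r = r @ q_regs (r ! j)"
  unfolding q_blk_def q_regs_def by (simp add: get_reg_def nth_append mat_app_def Let_def)

lemma q_cost: "length r = L \<Longrightarrow> j < L \<Longrightarrow> r ! j \<in> carrier_vec n \<Longrightarrow>
   exec_cost A B f cA cB (q_blk \<nu> j L) r = 2 * cB + real n"
  unfolding q_blk_def by (simp add: get_reg_def nth_append mat_app_def Let_def)

definition "gt_regs v = (let u = At *\<^sub>v v; x1 = f u; a1 = A *\<^sub>v x1; a2 = At *\<^sub>v a1; a3 = 1 \<cdot>\<^sub>v u + (-1) \<cdot>\<^sub>v a2;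
    a4 = 1 \<cdot>\<^sub>v a3 + (-\<nu>) \<cdot>\<^sub>v x1; x2 = f a4; hh = 1 \<cdot>\<^sub>v x1 + 1 \<cdot>\<^sub>v x2; a5 = A *\<^sub>v hh in
    [u, x1, a1, a2, a3, a4, x2, hh, a5, (1/\<nu>) \<cdot>\<^sub>v v + (-1/\<nu>) \<cdot>\<^sub>v a5])"

lemma gt_regs_len[simp]: "length (gt_regs v) = 10" unfolding gt_regs_def Let_def by simp
lemma gt_regs_9[simp]: "gt_regs v ! 9 = Gt v" unfolding gt_regs_def Gt_def hprog_def Let_def by simp

lemma gt_run: assumes r: "length r = L" "i < L" "r ! i \<in> carrier_vec n"
  shows "exec A B f (gt_blk \<nu> i L) r = r @ gt_regs (r ! i)"
    "exec_cost A B f cA cB (gt_blk \<nu> i L) r = 4 * cA + 3 * real d + real n"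
proof -
  define v where "v = r ! i"
  have v: "v \<in> carrier_vec n" using r unfolding v_def by simp
  define u where "u = At *\<^sub>v v"
  define x1 where "x1 = f u"
  define a1 where "a1 = A *\<^sub>v x1"
  define a2 where "a2 = At *\<^sub>v a1"
  define a3 where "a3 = 1 \<cdot>\<^sub>v u + (-1) \<cdot>\<^sub>v a2"
  define a4 where "a4 = 1 \<cdot>\<^sub>v a3 + (-\<nu>) \<cdot>\<^sub>v x1"
  define x2 where "x2 = f a4"
  define hh where "hh = 1 \<cdot>\<^sub>v x1 + 1 \<cdot>\<^sub>v x2"
  define a5 where "a5 = A *\<^sub>v hh"
  define out where "out = (1/\<nu>) \<cdot>\<^sub>v v + (-1/\<nu>) \<cdot>\<^sub>v a5"
  have u: "u \<in> carrier_vec d" unfolding u_def using v by simp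
  have x1: "x1 \<in> carrier_vec d" unfolding x1_def using f_props(1)[OF u] .
  have a1: "a1 \<in> carrier_vec n" unfolding a1_def using x1 by simp
  have a2: "a2 \<in> carrier_vec d" unfolding a2_def using a1 by simp
  have a3: "a3 \<in> carrier_vec d" unfolding a3_def using u a2 by simp
  have a4: "a4 \<in> carrier_vec d" unfolding a4_def using a3 x1 by simp
  have x2: "x2 \<in> carrier_vec d" unfolding x2_def using f_props(1)[OF a4] .
  have hh: "hh \<in> carrier_vec d" unfolding hh_def using x1 x2 by simp
  have a5: "a5 \<in> carrier_vec n" unfolding a5_def using hh by simp
  have G: "gt_regs v = [u, x1, a1, a2, a3, a4, x2, hh, a5, out]"
    unfolding gt_regs_def Let_def u_def x1_def a1_def a2_def a3_def a4_def x2_def hh_def a5_def out_def ..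
  have gi: "get_reg r i = v" unfolding v_def get_reg_def using r by simp
  note gr = get_reg_new[OF r(1)]
  have h1: "step A B f r (MulAt i) = u" using gi v by (simp del: step.simps add: step_mulAt u_def)
  have h2: "step A B f (r @ [u]) (CallF L) = x1" using gr by (simp del: step.simps add: step_call x1_def)
  have h3: "step A B f (r @ [u, x1]) (MulA (L+1)) = a1" using gr x1
    by (simp del: step.simps add: step_mulA a1_def)
  have h4: "step A B f (r @ [u, x1, a1]) (MulAt (L+2)) = a2" using gr a1
    by (simp del: step.simps add: step_mulAt a2_def)
  have h5: "step A B f (r @ [u, x1, a1, a2]) (LinComb 1 L (-1) (L+3)) = a3" using gr u a2
    by (simp del: step.simps add: step_lin a3_def)
  have h6: "step A B f (r @ [u, x1, a1, a2, a3]) (LinComb 1 (L+4) (-\<nu>) (L+1)) = a4" using gr a3 x1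
    by (simp del: step.simps add: step_lin a4_def)
  have h7: "step A B f (r @ [u, x1, a1, a2, a3, a4]) (CallF (L+5)) = x2" using gr
    by (simp del: step.simps add: step_call x2_def)
  have h8: "step A B f (r @ [u, x1, a1, a2, a3, a4, x2]) (LinComb 1 (L+1) 1 (L+6)) = hh" using gr x1 x2
    by (simp del: step.simps add: step_lin hh_def)
  have h9: "step A B f (r @ [u, x1, a1, a2, a3, a4, x2, hh]) (MulA (L+7)) = a5" using gr hh
    by (simp del: step.simps add: step_mulA a5_def)
  have gi2: "get_reg (r @ [u, x1, a1, a2, a3, a4, x2, hh, a5]) i = v" using gi r unfolding get_reg_def
    by (simp add: nth_append)
  have h10: "step A B f (r @ [u, x1, a1, a2, a3, a4, x2, hh, a5]) (LinComb (1/\<nu>) i (-1/\<nu>) (L+8)) = out"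
    using gr gi2 a5 v by (simp del: step.simps add: step_lin out_def)
  have "exec A B f (gt_blk \<nu> i L) r = r @ [u, x1, a1, a2, a3, a4, x2, hh, a5, out]"
    unfolding gt_blk_def
    by (simp only: exec.simps append_assoc append_Cons append_Nil h1 h2 h3 h4 h5 h6 h7 h8 h9 h10)
  thus "exec A B f (gt_blk \<nu> i L) r = r @ gt_regs (r ! i)" using G by (simp add: v_def)
  have "exec_cost A B f cA cB (gt_blk \<nu> i L) r = instr_cost cA cB r (MulAt i) + instr_cost cA cB (r @ [u]) (CallF L)
    + instr_cost cA cB (r @ [u, x1]) (MulA (L+1)) + instr_cost cA cB (r @ [u, x1, a1]) (MulAt (L+2))
    + instr_cost cA cB (r @ [u, x1, a1, a2]) (LinComb 1 L (-1) (L+3))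
    + instr_cost cA cB (r @ [u, x1, a1, a2, a3]) (LinComb 1 (L+4) (-\<nu>) (L+1))
    + instr_cost cA cB (r @ [u, x1, a1, a2, a3, a4]) (CallF (L+5))
    + instr_cost cA cB (r @ [u, x1, a1, a2, a3, a4, x2]) (LinComb 1 (L+1) 1 (L+6))
    + instr_cost cA cB (r @ [u, x1, a1, a2, a3, a4, x2, hh]) (MulA (L+7))
    + instr_cost cA cB (r @ [u, x1, a1, a2, a3, a4, x2, hh, a5]) (LinComb (1/\<nu>) i (-1/\<nu>) (L+8))"
    unfolding gt_blk_def
    by (simp only: exec_cost.simps append_assoc append_Cons append_Nil h1 h2 h3 h4 h5 h6 h7 h8 h9 h10 add.assoc add_0_right)
  also have "\<dots> = 4 * cA + 3 * real d + real n"
    using gr gi2 u x1 a3 a4 v by simp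
  finally show "exec_cost A B f cA cB (gt_blk \<nu> i L) r = 4 * cA + 3 * real d + real n" .
qed


lemma q_run: assumes r: "length r = L" "j < L" "r ! j \<in> carrier_vec n"
  shows "exec A B f (q_blk \<nu> j L) r = r @ q_regs (r ! j)"
    "exec_cost A B f cA cB (q_blk \<nu> j L) r = 2 * cB + real n"
  using q_exec[OF r] q_cost[OF r] by auto

definition "step_regs b y = (let qy = q_regs y; rr = 1 \<cdot>\<^sub>v (B *\<^sub>v b) + (-1) \<cdot>\<^sub>v Qv y; g1 = Gt rr;
   g2 = Gt (Qv g1); y1 = 1 \<cdot>\<^sub>v y + (544/353) \<cdot>\<^sub>v g1 in
   qy @ [rr] @ gt_regs rr @ q_regs g1 @ gt_regs (Qv g1) @ [y1, 1 \<cdot>\<^sub>v y1 + (-(128/353)) \<cdot>\<^sub>v g2])"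

lemma step_regs_len[simp]: "length (step_regs b y) = 29" unfolding step_regs_def Let_def by simp

lemma step_regs_last: "step_regs b y ! 28 = stepf b y"
  unfolding step_regs_def stepf_def Let_def ss_def tt_def by (simp add: nth_append)

lemma step_run: assumes r: "length r = L" "3 \<le> L" "r ! 1 = B *\<^sub>v b" "r ! (L - 1) = y"
  and b: "b \<in> carrier_vec s" and y: "y \<in> carrier_vec n"
  shows "exec A B f (step_blk \<nu> L) r = r @ step_regs b y"
    "exec_cost A B f cA cB (step_blk \<nu> L) r = 4 * cB + 8 * cA + 6 * real d + 7 * real n"
proof -
  define rr where "rr = 1 \<cdot>\<^sub>v (B *\<^sub>v b) + (-1) \<cdot>\<^sub>v Qv y"
  have rr: "rr \<in> carrier_vec n" unfolding rr_def using b y by simp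
  define g1 where "g1 = Gt rr"
  have g1: "g1 \<in> carrier_vec n" unfolding g1_def using rr by simp
  define g2 where "g2 = Gt (Qv g1)"
  have g2: "g2 \<in> carrier_vec n" unfolding g2_def using g1 by simp
  define y1 where "y1 = 1 \<cdot>\<^sub>v y + (544/353) \<cdot>\<^sub>v g1"
  have y1: "y1 \<in> carrier_vec n" unfolding y1_def using y g1 by simp
  define R1 where "R1 = r @ q_regs y"
  define R2 where "R2 = R1 @ [rr]"
  define R3 where "R3 = R2 @ gt_regs rr"
  define R4 where "R4 = R3 @ q_regs g1"
  define R5 where "R5 = R4 @ gt_regs (Qv g1)"
  define R6 where "R6 = R5 @ [y1]"
  define R7 where "R7 = R6 @ [1 \<cdot>\<^sub>v y1 + (-(128/353)) \<cdot>\<^sub>v g2]"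
  have lens: "length R1 = L + 3" "length R2 = L + 4" "length R3 = L + 14" "length R4 = L + 17"
    "length R5 = L + 27" "length R6 = L + 28"
    unfolding R1_def R2_def R3_def R4_def R5_def R6_def using r by auto
  have L1: "L - 1 < L" using r by simp
  have e1: "exec A B f (q_blk \<nu> (L-1) L) r = R1" "exec_cost A B f cA cB (q_blk \<nu> (L-1) L) r = 2 * cB + real n"
    using q_run[OF r(1) L1] r y unfolding R1_def by auto
  have gR1a: "get_reg R1 1 = B *\<^sub>v b" unfolding R1_def get_reg_def using r by (simp add: nth_append)
  have gR1b: "get_reg R1 (L + 2) = Qv y" unfolding R1_def get_reg_def using r by (simp add: nth_append)
  have st2: "step A B f R1 (LinComb 1 1 (-1) (L+2)) = rr" unfolding rr_def using gR1a gR1b b y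
    by (simp del: step.simps add: step_lin)
  have e2: "exec A B f [LinComb 1 1 (-1) (L+2)] R1 = R2"
    "exec_cost A B f cA cB [LinComb 1 1 (-1) (L+2)] R1 = real n"
    unfolding R2_def using st2 gR1a b by simp_all
  have R2i: "R2 ! (L+3) = rr" unfolding R2_def using lens by (simp add: nth_append)
  have e3: "exec A B f (gt_blk \<nu> (L+3) (L+4)) R2 = R3"
    "exec_cost A B f cA cB (gt_blk \<nu> (L+3) (L+4)) R2 = 4 * cA + 3 * real d + real n"
    using gt_run[OF lens(2), of "L+3"] R2i rr unfolding R3_def by auto
  have R3i: "R3 ! (L+13) = g1" unfolding R3_def g1_def using lens by (simp add: nth_append)
  have e4: "exec A B f (q_blk \<nu> (L+13) (L+14)) R3 = R4"
    "exec_cost A B f cA cB (q_blk \<nu> (L+13) (L+14)) R3 = 2 * cB + real n"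
    using q_run[OF lens(3), of "L+13"] R3i g1 unfolding R4_def by auto
  have R4i: "R4 ! (L+16) = Qv g1" unfolding R4_def using lens by (simp add: nth_append)
  have e5: "exec A B f (gt_blk \<nu> (L+16) (L+17)) R4 = R5"
    "exec_cost A B f cA cB (gt_blk \<nu> (L+16) (L+17)) R4 = 4 * cA + 3 * real d + real n"
    using gt_run[OF lens(4), of "L+16"] R4i g1 unfolding R5_def by auto
  have gR5a: "get_reg R5 (L - 1) = y" unfolding R5_def R4_def R3_def R2_def R1_def get_reg_def using r
    by (auto simp: nth_append)
  have gR5b: "get_reg R5 (L + 13) = g1" unfolding get_reg_def using R3i lens
    unfolding R5_def R4_def by (simp add: nth_append)
  have st6: "step A B f R5 (LinComb 1 (L-1) (544/353) (L+13)) = y1" unfolding y1_def using gR5a gR5b y g1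
    by (simp del: step.simps add: step_lin)
  have gR6a: "get_reg R6 (L + 27) = y1" unfolding R6_def get_reg_def using lens by (simp add: nth_append)
  have gR6b: "get_reg R6 (L + 26) = g2" unfolding R6_def R5_def get_reg_def g2_def using lens
    by (simp add: nth_append)
  have st7: "step A B f R6 (LinComb 1 (L+27) (-(128/353)) (L+26)) = 1 \<cdot>\<^sub>v y1 + (-(128/353)) \<cdot>\<^sub>v g2"
    using gR6a gR6b y1 g2 by (simp del: step.simps add: step_lin)
  have e6: "exec A B f [LinComb 1 (L-1) (544/353) (L+13), LinComb 1 (L+27) (-(128/353)) (L+26)] R5 = R7"
    "exec_cost A B f cA cB [LinComb 1 (L-1) (544/353) (L+13), LinComb 1 (L+27) (-(128/353)) (L+26)] R5 = 2 * real n"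
    unfolding R7_def using st6 st7 gR5a gR6a y y1 by (simp_all add: R6_def[symmetric])
  have R7e: "R7 = r @ step_regs b y"
    unfolding R7_def R6_def R5_def R4_def R3_def R2_def R1_def step_regs_def Let_def
      rr_def[symmetric] g1_def[symmetric] g2_def[symmetric] y1_def[symmetric] by simp
  show "exec A B f (step_blk \<nu> L) r = r @ step_regs b y"
    unfolding step_blk_def exec_append e1 e2 e3 e4 e5 e6 R7e ..
  show "exec_cost A B f cA cB (step_blk \<nu> L) r = 4 * cB + 8 * cA + 6 * real d + 7 * real n"
    unfolding step_blk_def exec_cost_append exec_append e1 e2 e3 e4 e5 e6 by simp
qed

end

context setting_f begin

lemma init_run: assumes b: "b \<in> carrier_vec s"
  shows "exec A B f [MulB 0, LinComb 0 1 0 1] [b] = [b, B *\<^sub>v b, 0\<^sub>v n]"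
    "exec_cost A B f cA cB [MulB 0, LinComb 0 1 0 1] [b] = cB + real n"
proof -
  have g0: "get_reg [b] 0 = b" unfolding get_reg_def by simp
  have st1: "step A B f [b] (MulB 0) = B *\<^sub>v b" using g0 b by (simp del: step.simps add: step_mulB)
  have g1: "get_reg [b, B *\<^sub>v b] 1 = B *\<^sub>v b" unfolding get_reg_def by simp
  have st2: "step A B f [b, B *\<^sub>v b] (LinComb 0 1 0 1) = 0\<^sub>v n"
    using g1 b by (simp del: step.simps add: step_lin) (intro eq_vecI, auto)
  show "exec A B f [MulB 0, LinComb 0 1 0 1] [b] = [b, B *\<^sub>v b, 0\<^sub>v n]" using st1 st2 by simp
  show "exec_cost A B f cA cB [MulB 0, LinComb 0 1 0 1] [b] = cB + real n" using st1 g1 b by simp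
qed

lemma steps_run: assumes b: "b \<in> carrier_vec s"
  shows "length (exec A B f (steps \<nu> k) [b, B *\<^sub>v b, 0\<^sub>v n]) = 3 + 29 * k \<and>
    exec A B f (steps \<nu> k) [b, B *\<^sub>v b, 0\<^sub>v n] ! 0 = b \<and>
    exec A B f (steps \<nu> k) [b, B *\<^sub>v b, 0\<^sub>v n] ! 1 = B *\<^sub>v b \<and>
    exec A B f (steps \<nu> k) [b, B *\<^sub>v b, 0\<^sub>v n] ! (2 + 29 * k) = yk b k \<and>
    exec_cost A B f cA cB (steps \<nu> k) [b, B *\<^sub>v b, 0\<^sub>v n] = real k * (4 * cB + 8 * cA + 6 * real d + 7 * real n)"
proof (induct k)
  case 0 thus ?case unfolding yk_def by simp
next
  case (Suc k)
  define R where "R = exec A B f (steps \<nu> k) [b, B *\<^sub>v b, 0\<^sub>v n]"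
  have IH: "length R = 3 + 29 * k" "R ! 0 = b" "R ! 1 = B *\<^sub>v b" "R ! (2 + 29 * k) = yk b k"
    "exec_cost A B f cA cB (steps \<nu> k) [b, B *\<^sub>v b, 0\<^sub>v n] = real k * (4 * cB + 8 * cA + 6 * real d + 7 * real n)"
    using Suc unfolding R_def by auto
  have Lm: "3 + 29 * k - 1 = 2 + 29 * k" by simp
  have sr: "exec A B f (step_blk \<nu> (3 + 29 * k)) R = R @ step_regs b (yk b k)"
    "exec_cost A B f cA cB (step_blk \<nu> (3 + 29 * k)) R = 4 * cB + 8 * cA + 6 * real d + 7 * real n"
    using step_run[OF IH(1) _ IH(3) _ b, of "yk b k"] IH(4) b unfolding Lm by auto
  have ex: "exec A B f (steps \<nu> (Suc k)) [b, B *\<^sub>v b, 0\<^sub>v n] = R @ step_regs b (yk b k)"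
    by (simp add: exec_append R_def[symmetric] sr)
  have i28: "(R @ step_regs b (yk b k)) ! (2 + 29 * Suc k) = yk b (Suc k)"
  proof -
    have "(R @ step_regs b (yk b k)) ! (2 + 29 * Suc k) = step_regs b (yk b k) ! 28"
      using IH(1) by (simp add: nth_append)
    thus ?thesis by (simp add: step_regs_last yk_Suc)
  qed
  have c: "exec_cost A B f cA cB (steps \<nu> (Suc k)) [b, B *\<^sub>v b, 0\<^sub>v n] =
      real k * (4 * cB + 8 * cA + 6 * real d + 7 * real n) + (4 * cB + 8 * cA + 6 * real d + 7 * real n)"
    using IH(5) sr(2) by (simp add: exec_cost_append R_def[symmetric])
  show ?case
  proof (intro conjI)
    show "length (exec A B f (steps \<nu> (Suc k)) [b, B *\<^sub>v b, 0\<^sub>v n]) = 3 + 29 * Suc k"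
      unfolding ex using IH(1) by simp
    show "exec A B f (steps \<nu> (Suc k)) [b, B *\<^sub>v b, 0\<^sub>v n] ! 0 = b"
      unfolding ex using IH(1,2) by (simp add: nth_append)
    show "exec A B f (steps \<nu> (Suc k)) [b, B *\<^sub>v b, 0\<^sub>v n] ! 1 = B *\<^sub>v b"
      unfolding ex using IH(1,3) by (simp add: nth_append)
    show "exec A B f (steps \<nu> (Suc k)) [b, B *\<^sub>v b, 0\<^sub>v n] ! (2 + 29 * Suc k) = yk b (Suc k)"
      unfolding ex by (rule i28)
    show "exec_cost A B f cA cB (steps \<nu> (Suc k)) [b, B *\<^sub>v b, 0\<^sub>v n] =
      real (Suc k) * (4 * cB + 8 * cA + 6 * real d + 7 * real n)"
      unfolding c by (simp add: algebra_simps)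
  qed
qed

lemma prog_run: assumes b: "b \<in> carrier_vec s"
  shows "run_prog A B f (prog \<nu> T) b = xout b (yk b T)"
    "prog_cost A B f cA cB (prog \<nu> T) b = cB + real n + real T * (4 * cB + 8 * cA + 6 * real d + 7 * real n) + (cB + real s)"
proof -
  define R where "R = exec A B f (steps \<nu> T) [b, B *\<^sub>v b, 0\<^sub>v n]"
  have P: "length R = 3 + 29 * T" "R ! 0 = b" "R ! (2 + 29 * T) = yk b T"
    "exec_cost A B f cA cB (steps \<nu> T) [b, B *\<^sub>v b, 0\<^sub>v n] = real T * (4 * cB + 8 * cA + 6 * real d + 7 * real n)"
    using steps_run[OF b, of T] unfolding R_def by auto
  define y where "y = yk b T"
  have y: "y \<in> carrier_vec n" unfolding y_def using b by simp
  have g1: "get_reg R (2 + 29 * T) = y" unfolding get_reg_def y_def using P by simp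
  have st1: "step A B f R (MulBt (2 + 29 * T)) = Bt *\<^sub>v y" using g1 y
    by (simp del: step.simps add: step_mulBt)
  have g2: "get_reg (R @ [Bt *\<^sub>v y]) 0 = b" unfolding get_reg_def using P by (simp add: nth_append)
  have g3: "get_reg (R @ [Bt *\<^sub>v y]) (3 + 29 * T) = Bt *\<^sub>v y" unfolding get_reg_def using P by (simp add: nth_append)
  have st2: "step A B f (R @ [Bt *\<^sub>v y]) (LinComb (1/\<nu>) 0 (-1/\<nu>) (3 + 29 * T)) = xout b y"
    using g2 g3 b y unfolding xout_def by (simp del: step.simps add: step_lin)
  have ex: "exec A B f (prog \<nu> T) [b] = R @ [Bt *\<^sub>v y, xout b y]"
    unfolding prog_def exec_append init_run[OF b] R_def[symmetric] using st1 st2 by simp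
  show "run_prog A B f (prog \<nu> T) b = xout b (yk b T)" unfolding run_prog_def ex y_def by simp
  show "prog_cost A B f cA cB (prog \<nu> T) b = cB + real n + real T * (4 * cB + 8 * cA + 6 * real d + 7 * real n) + (cB + real s)"
    unfolding prog_cost_def prog_def exec_cost_append exec_append init_run[OF b] R_def[symmetric] P(4)
    using st1 st2 g1 g2 b y by simp
qed

end

lemma ln43: "1/4 \<le> ln (4/3::real)"
proof -
  have "ln (3/4::real) \<le> 3/4 - 1" by (rule ln_le_minus_one) simp
  moreover have "ln (3/4::real) = - ln (4/3)" using ln_inverse[of "4/3::real"] by simp
  ultimately show ?thesis by simp
qed

lemma ln2b: "1/2 \<le> ln (2::real)" "ln (2::real) \<le> 1"
proof -
  have "ln (1/2::real) \<le> 1/2 - 1" by (rule ln_le_minus_one) simp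
  moreover have "ln (1/2::real) = - ln 2" using ln_inverse[of "2::real"] by simp
  ultimately show "1/2 \<le> ln (2::real)" by simp
  show "ln (2::real) \<le> 1" using ln_le_minus_one[of "2::real"] by simp
qed

lemma numerics:
  fixes \<kappa> \<epsilon> :: real and T :: nat
  assumes K: "1 \<le> \<kappa>" and e0: "0 < \<epsilon>" and e1: "\<epsilon> < 1"
    and T: "T = nat \<lceil>ln (16 * \<kappa>\<^sup>2 / \<epsilon>) / (2 * ln (4/3))\<rceil>"
  shows "(4 * \<kappa>)\<^sup>2 * (9/16)^T \<le> \<epsilon>" "real (4 * T) \<le> 16 * ln (8 * \<kappa> / \<epsilon>)"
    "real T \<le> 9 + 4 * ln (\<kappa> / \<epsilon>)"
proof -
  define l where "l = ln (4/3::real)"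
  have l: "1/4 \<le> l" unfolding l_def by (rule ln43)
  have lk: "0 \<le> ln \<kappa>" using K by simp
  have le: "ln \<epsilon> < 0" using e0 e1 by simp
  have l2: "1/2 \<le> ln (2::real)" "ln (2::real) \<le> 1" by (rule ln2b)+
  have kp: "0 < \<kappa>" using K by simp
  have l16: "ln (16::real) = 4 * ln 2" using ln_realpow[of "2::real" 4] by simp
  have l8: "ln (8::real) = 3 * ln 2" using ln_realpow[of "2::real" 3] by simp
  define L0 where "L0 = ln (16 * \<kappa>\<^sup>2 / \<epsilon>)"
  have L0e: "L0 = 4 * ln 2 + 2 * ln \<kappa> - ln \<epsilon>"
    unfolding L0_def using kp e0 by (simp add: ln_divide_pos ln_mult_pos ln_realpow l16)
  have L0p: "0 < L0" unfolding L0e using l2 lk le by linarith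
  define x where "x = L0 / (2 * l)"
  have xp: "0 < x" unfolding x_def using L0p l by simp
  have Tx: "x \<le> real T" "real T < x + 1" unfolding T L0_def[symmetric] l_def[symmetric] x_def[symmetric]
    using xp by (auto intro: le_of_int_ceiling) linarith
  have x2: "x \<le> 2 * L0" unfolding x_def using L0p l by (simp add: field_simps)
  have "L0 \<le> 2 * l * real T" using Tx(1) l unfolding x_def by (simp add: field_simps)
  hence a: "ln ((4 * \<kappa>)\<^sup>2) - ln \<epsilon> \<le> 2 * l * real T"
    unfolding L0e using kp by (simp add: ln_mult_pos ln_realpow power_mult_distrib l16
      ln_realpow[of "4::real" 2, simplified] algebra_simps)
  have p9: "ln ((9/16::real)^T) = - (2 * l * real T)"
  proof -
    have "ln (9/16::real) = 2 * ln (3/4)" using ln_realpow[of "3/4::real" 2] by (simp add: power2_eq_square)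
    hence "ln ((9/16::real)^T) = real T * (2 * ln (3/4))" by (simp add: ln_realpow)
    moreover have "ln (3/4::real) = - l" unfolding l_def using ln_inverse[of "4/3::real"] by simp
    ultimately show ?thesis by simp
  qed
  have "ln ((4 * \<kappa>)\<^sup>2 * (9/16)^T) \<le> ln \<epsilon>"
    using a p9 kp by (simp add: ln_mult_pos)
  thus "(4 * \<kappa>)\<^sup>2 * (9/16)^T \<le> \<epsilon>" using kp e0 by simp
  have "real (4 * T) < 4 * x + 4" using Tx by simp
  also have "\<dots> \<le> 8 * L0 + 4" using x2 by simp
  also have "\<dots> \<le> 16 * ln (8 * \<kappa> / \<epsilon>)"
  proof -
    have h: "ln (8 * \<kappa> / \<epsilon>) = 3 * ln 2 + ln \<kappa> - ln \<epsilon>" using kp e0 by (simp add: ln_divide_pos ln_mult_pos l8)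
    have "32 * ln 2 + 16 * ln \<kappa> - 8 * ln \<epsilon> + 4 \<le> 48 * ln 2 + 16 * ln \<kappa> - 16 * ln \<epsilon>"
      using l2 le by linarith
    hence "8 * (4 * ln 2 + 2 * ln \<kappa> - ln \<epsilon>) + 4 \<le> 16 * (3 * ln 2 + ln \<kappa> - ln \<epsilon>)"
      by (simp add: algebra_simps)
    thus ?thesis unfolding L0e h .
  qed
  finally show "real (4 * T) \<le> 16 * ln (8 * \<kappa> / \<epsilon>)" by simp
  have Le: "ln (\<kappa> / \<epsilon>) = ln \<kappa> - ln \<epsilon>" using kp e0 by (simp add: ln_divide_pos)
  have "real T < 2 * L0 + 1" using Tx x2 by simp
  also have "\<dots> \<le> 9 + 4 * ln (\<kappa> / \<epsilon>)"
  proof -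
    have "8 * ln 2 + 4 * ln \<kappa> - 2 * ln \<epsilon> + 1 \<le> 9 + 4 * ln \<kappa> - 4 * ln \<epsilon>" using l2 lk le by linarith
    thus ?thesis unfolding L0e Le by (simp add: algebra_simps)
  qed
  finally show "real T \<le> 9 + 4 * ln (\<kappa> / \<epsilon>)" by simp
qed


lemma main_lemma:
  fixes n d s :: nat and A B :: "real mat" and \<nu> \<epsilon> :: real
  assumes A: "A \<in> carrier_mat n d" and B: "B \<in> carrier_mat n s" and nu: "\<nu> > 0"
    and e0: "0 < \<epsilon>" and e1: "\<epsilon> < 1"
    and ap: "spectral_approx 4 (A * transpose_mat A + \<nu> \<cdot>\<^sub>m 1\<^sub>m n) (B * transpose_mat B + \<nu> \<cdot>\<^sub>m 1\<^sub>m n)"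
  shows "let \<kappa> = 1 + (spec_norm A)\<^sup>2 / \<nu> in
      \<exists>p. real (num_calls p) \<le> 16 * ln (8 * \<kappa> / \<epsilon>) \<and>
        (\<forall>f cA cB. 0 \<le> cA \<longrightarrow> 0 \<le> cB \<longrightarrow>
           eps_solver (transpose_mat A * A + \<nu> \<cdot>\<^sub>m 1\<^sub>m d) (1 / (160 * \<kappa>\<^sup>2)) f \<longrightarrow>
           eps_solver (transpose_mat B * B + \<nu> \<cdot>\<^sub>m 1\<^sub>m s) \<epsilon> (run_prog A B f p) \<and>
           (\<forall>b. dim_vec b = s \<longrightarrow>
              prog_cost A B f cA cB p b
                \<le> 100 * (real n + (cA + real n + real d) + (cB + real n + real s)) * (1 + ln (\<kappa> / \<epsilon>))))"
proof -
  interpret S: setting n d s A B \<nu> using A B nu ap by unfold_locales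
  have kd: "1 + (spec_norm A)\<^sup>2 / \<nu> = S.\<kappa>" unfolding S.\<kappa>_def S.\<alpha>_def ..
  have K: "1 \<le> S.\<kappa>" unfolding S.\<kappa>_def using S.alpha0 nu by simp
  define T where "T = nat \<lceil>ln (16 * S.\<kappa>\<^sup>2 / \<epsilon>) / (2 * ln (4/3))\<rceil>"
  note num = numerics[OF K e0 e1 T_def]
  show ?thesis unfolding Let_def kd
  proof (intro exI[of _ "prog \<nu> T"] conjI allI impI)
    show "real (num_calls (prog \<nu> T)) \<le> 16 * ln (8 * S.\<kappa> / \<epsilon>)" using num(2) by (simp add: calls_prog)
  next
    fix f :: "real vec \<Rightarrow> real vec" and cA cB :: real
    assume cA: "0 \<le> cA" and cB: "0 \<le> cB"
      and fs: "eps_solver (transpose_mat A * A + \<nu> \<cdot>\<^sub>m 1\<^sub>m d) (1 / (160 * S.\<kappa>\<^sup>2)) f"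
    interpret F: setting_f n d s A B \<nu> f using A B nu ap fs by unfold_locales auto
    have Ne: "transpose_mat B * B + \<nu> \<cdot>\<^sub>m 1\<^sub>m s = S.Nm" using KK_def[OF B nu] by simp
    have Nie: "mat_inv S.Nm = S.Ni" using Ki_def[OF B nu] by simp
    have Nc: "S.Nm \<in> carrier_mat s s" using KK[OF B nu] .
    show "eps_solver (transpose_mat B * B + \<nu> \<cdot>\<^sub>m 1\<^sub>m s) \<epsilon> (run_prog A B f (prog \<nu> T))"
      unfolding eps_solver_def eps_solution_def Ne Nie
    proof (intro allI impI conjI)
      fix b :: "real vec" assume "dim_vec b = dim_row S.Nm"
      hence b: "b \<in> carrier_vec s" using Nc by auto
      have run: "run_prog A B f (prog \<nu> T) b = F.xout b (F.yk b T)" by (rule F.prog_run(1)[OF b])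
      have xc: "F.xout b (F.yk b T) \<in> carrier_vec s" using b by simp
      show "dim_vec (run_prog A B f (prog \<nu> T) b) = dim_vec b" using run xc b by simp
      have ec: "F.xout b (F.yk b T) - S.Ni *\<^sub>v b \<in> carrier_vec s" using xc b by simp
      have "qform S.Nm (run_prog A B f (prog \<nu> T) b - S.Ni *\<^sub>v b)
          = S.fN (F.xout b (F.yk b T) - F.xs b) (F.xout b (F.yk b T) - F.xs b)"
        unfolding run qform_def F.xs_def by (rule KK_form[OF B nu ec ec])
      also have "\<dots> \<le> ((S.\<beta> + \<nu>) / \<nu>)\<^sup>2 * (9/16)^T * (b \<bullet> (S.Ni *\<^sub>v b))" by (rule F.total_err[OF b])
      also have "(S.\<beta> + \<nu>) / \<nu> = 4 * S.\<kappa>" unfolding S.\<beta>_def S.\<kappa>_def using nu by (simp add: field_simps)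
      also have "(4 * S.\<kappa>)\<^sup>2 * (9/16)^T * (b \<bullet> (S.Ni *\<^sub>v b)) \<le> \<epsilon> * (b \<bullet> (S.Ni *\<^sub>v b))"
      proof (rule mult_right_mono[OF num(1)])
        show "0 \<le> b \<bullet> (S.Ni *\<^sub>v b)" unfolding Ki_form[OF B nu b] by (rule fm_nonneg[OF B S.nu0 S.nu0])
      qed
      finally show "qform S.Nm (run_prog A B f (prog \<nu> T) b - S.Ni *\<^sub>v b) \<le> \<epsilon> * qform S.Ni b"
        unfolding qform_def .
    qed
  next
    fix f :: "real vec \<Rightarrow> real vec" and cA cB :: real and b :: "real vec"
    assume cA: "0 \<le> cA" and cB: "0 \<le> cB"
      and fs: "eps_solver (transpose_mat A * A + \<nu> \<cdot>\<^sub>m 1\<^sub>m d) (1 / (160 * S.\<kappa>\<^sup>2)) f"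
      and bd: "dim_vec b = s"
    interpret F: setting_f n d s A B \<nu> f using A B nu ap fs by unfold_locales auto
    have b: "b \<in> carrier_vec s" using bd by auto
    define D where "D = real n + (cA + real n + real d) + (cB + real n + real s)"
    define Lm where "Lm = ln (S.\<kappa> / \<epsilon>)"
    have Lm0: "0 \<le> Lm" unfolding Lm_def using K e0 e1 by (simp add: divide_simps)
    have D0: "0 \<le> D" unfolding D_def using cA cB by simp
    have X: "4 * cB + 8 * cA + 6 * real d + 7 * real n \<le> 8 * D" unfolding D_def using cA cB by simp
    have TX: "real T * (4 * cB + 8 * cA + 6 * real d + 7 * real n) \<le> real T * (8 * D)"
      using X by (intro mult_left_mono) auto
    have TD: "real T * (8 * D) \<le> (9 + 4 * Lm) * (8 * D)"
      using num(3) D0 unfolding Lm_def by (intro mult_right_mono) auto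
    have "prog_cost A B f cA cB (prog \<nu> T) b = cB + real n + real T * (4 * cB + 8 * cA + 6 * real d + 7 * real n) + (cB + real s)"
      by (rule F.prog_run(2)[OF b])
    also have "\<dots> \<le> 2 * D + (9 + 4 * Lm) * (8 * D)" using TX TD unfolding D_def using cA cB by simp
    also have "\<dots> = 74 * D + 32 * (Lm * D)" by (simp add: algebra_simps)
    also have "\<dots> \<le> 100 * D + 100 * (Lm * D)" using D0 Lm0 by simp
    also have "\<dots> = 100 * D * (1 + Lm)" by (simp add: algebra_simps)
    finally show "prog_cost A B f cA cB (prog \<nu> T) b
        \<le> 100 * (real n + (cA + real n + real d) + (cB + real n + real s)) * (1 + ln (S.\<kappa> / \<epsilon>))"
      unfolding D_def Lm_def .
  qed
qed

theorem lemma5p1: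
  "\<exists>C>0. \<forall>(n::nat) (d::nat) (s::nat) (A::real mat) (B::real mat) (\<nu>::real) (\<epsilon>::real).
     A \<in> carrier_mat n d \<longrightarrow> B \<in> carrier_mat n s \<longrightarrow> \<nu> > 0 \<longrightarrow> 0 < \<epsilon> \<longrightarrow> \<epsilon> < 1 \<longrightarrow>
     spectral_approx 4 (A * transpose_mat A + \<nu> \<cdot>\<^sub>m 1\<^sub>m n) (B * transpose_mat B + \<nu> \<cdot>\<^sub>m 1\<^sub>m n) \<longrightarrow>
     (let \<kappa> = 1 + (spec_norm A)\<^sup>2 / \<nu> in
      \<exists>p. real (num_calls p) \<le> 16 * ln (8 * \<kappa> / \<epsilon>) \<and>
        (\<forall>f cA cB. 0 \<le> cA \<longrightarrow> 0 \<le> cB \<longrightarrow>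
           eps_solver (transpose_mat A * A + \<nu> \<cdot>\<^sub>m 1\<^sub>m d) (1 / (160 * \<kappa>\<^sup>2)) f \<longrightarrow>
           eps_solver (transpose_mat B * B + \<nu> \<cdot>\<^sub>m 1\<^sub>m s) \<epsilon> (run_prog A B f p) \<and>
           (\<forall>b. dim_vec b = s \<longrightarrow>
              prog_cost A B f cA cB p b
                \<le> C * (real n + (cA + real n + real d) + (cB + real n + real s)) * (1 + ln (\<kappa> / \<epsilon>)))))"
  apply (rule exI[of _ "100::real"])
  apply (intro conjI allI impI)
   apply simp
  apply (rule main_lemma)
       apply assumption+
  done

end
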